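(* As formal power series, $F(z)=B(zF(z)^2)$ and $R(z,q)=B(zR(z,q)^2,q)$, where $F(z)=\sum_{n\ge0}n!\,z^n$, $B(z)=\sum_{n\ge0}b_nz^n$, $R(z,q)=\sum_{n,k\ge0}r_{n,k}z^nq^k$ and $B(z,q)=\sum_{n,k\ge0}b_{n,k}z^nq^k$.
   Context: A pairing of $[2n]$ is a partition of $[2n]=\{1,\dots,2n\}$ into $n$ two-element blocks. Two blocks $\{a,b\}$ ($a<b$) and $\{c,d\}$ ($c<d$) cross if $a<c<b<d$ or $c<a<d<b$. A pairing is parity-reversing if every block contains one odd and one even integer. $r_{n,k}$ denotes the number of parity-reversing pairings of $[2n]$ with exactly $k$ crossings, with the convention $r_{0,0}=1$, $r_{0,k}=0$ for $k>0$. A parity-reversing pairing of $[2n]$ ($n\ge1$) is connected if there is no partition of its set of blocks into two nonempty subsets $C_1,C_2$ such that no block of $C_1$ crosses a block of $C_2$. $b_{n,k}$ is the number of connected parity-reversing pairings of $[2n]$ with exactly $k$ crossings and $b_n=\sum_k b_{n,k}$, with conventions $b_0=b_{0,0}=1$, $b_{0,k}=0$ for $k>0$. *)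

theory Defs
  imports "HOL-Computational_Algebra.Formal_Power_Series"
begin

definition pairing :: "nat \<Rightarrow> nat set set \<Rightarrow> bool" where
  "pairing n P \<longleftrightarrow> (\<forall>b\<in>P. card b = 2) \<and> \<Union>P = {1..2*n}
      \<and> (\<forall>b\<in>P. \<forall>c\<in>P. b \<noteq> c \<longrightarrow> b \<inter> c = {})"

definition parity_reversing :: "nat set set \<Rightarrow> bool" where
  "parity_reversing P \<longleftrightarrow> (\<forall>b\<in>P. \<exists>x\<in>b. \<exists>y\<in>b. odd x \<and> even y)"

definition crosses :: "nat set \<Rightarrow> nat set \<Rightarrow> bool" where
  "crosses x y \<longleftrightarrow>
     (Min x < Min y \<and> Min y < Max x \<and> Max x < Max y) \<or>
     (Min y < Min x \<and> Min x < Max y \<and> Max y < Max x)"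

text \<open>Number of crossings: unordered crossing pairs, each counted once
  (ordered by the smaller left endpoint).\<close>
definition crossings :: "nat set set \<Rightarrow> nat" where
  "crossings P = card {(x, y). x \<in> P \<and> y \<in> P \<and> Min x < Min y \<and> crosses x y}"

definition connected_pairing :: "nat set set \<Rightarrow> bool" where
  "connected_pairing P \<longleftrightarrow>
     \<not> (\<exists>C1 C2. C1 \<noteq> {} \<and> C2 \<noteq> {} \<and> C1 \<union> C2 = P \<and> C1 \<inter> C2 = {}
            \<and> (\<forall>x\<in>C1. \<forall>y\<in>C2. \<not> crosses x y))"

definition r_nk :: "nat \<Rightarrow> nat \<Rightarrow> nat" where
  "r_nk n k = card {P. pairing n P \<and> parity_reversing P \<and> crossings P = k}"

definition b_nk :: "nat \<Rightarrow> nat \<Rightarrow> nat" where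
  "b_nk n k = (if n = 0 then (if k = 0 then 1 else 0) else
     card {P. pairing n P \<and> parity_reversing P \<and> connected_pairing P \<and> crossings P = k})"

definition b_n :: "nat \<Rightarrow> nat" where
  "b_n n = (if n = 0 then 1 else
     card {P. pairing n P \<and> parity_reversing P \<and> connected_pairing P})"

definition F_fps :: "int fps" where
  "F_fps = Abs_fps (\<lambda>n. int (fact n))"

definition B_fps :: "int fps" where
  "B_fps = Abs_fps (\<lambda>n. int (b_n n))"

text \<open>Bivariate series in z and q as power series in z whose coefficients are
  power series in q:  Z[[q]][[z]].\<close>
definition R_fps :: "int fps fps" where
  "R_fps = Abs_fps (\<lambda>n. Abs_fps (\<lambda>k. int (r_nk n k)))"

definition B2_fps :: "int fps fps" where
  "B2_fps = Abs_fps (\<lambda>n. Abs_fps (\<lambda>k. int (b_nk n k)))"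

end

theory Submission
  imports Defs
begin

unbundle fps_syntax

definition dblocks :: "nat set set \<Rightarrow> bool" where
  "dblocks P \<longleftrightarrow> (\<forall>b\<in>P. card b = 2) \<and> (\<forall>b\<in>P. \<forall>c\<in>P. b \<noteq> c \<longrightarrow> b \<inter> c = {})"

lemma pairing_iff: "pairing n P \<longleftrightarrow> dblocks P \<and> \<Union>P = {1..2*n}"
  unfolding pairing_def dblocks_def by blast

lemma card2D: assumes "card b = 2"
  shows "finite b" "b \<noteq> {}" "Min b < Max b" "b = {Min b, Max b}" "Min b \<in> b" "Max b \<in> b"
proof -
  obtain x y where b: "b = {x,y}" "x \<noteq> y" using assms by (auto simp: card_2_iff)
  show "finite b" "b \<noteq> {}" "Min b < Max b" "b = {Min b, Max b}" "Min b \<in> b" "Max b \<in> b"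
    using b by (auto simp: min_def max_def)
qed

lemma card2_mem: assumes "card b = 2" "x \<in> b" shows "Min b \<le> x" "x \<le> Max b" "x = Min b \<or> x = Max b"
proof -
  show "Min b \<le> x" "x \<le> Max b" using assms card2D(1)[OF assms(1)] by auto
  show "x = Min b \<or> x = Max b" using assms card2D(4)[OF assms(1)] by blast
qed

lemma dblocks_finite_Union: "dblocks P \<Longrightarrow> finite (\<Union>P) \<Longrightarrow> finite P"
  unfolding dblocks_def by (metis finite_UnionD)

lemma card_Union_dblocks: assumes "dblocks P" "finite P" shows "card (\<Union>P) = 2 * card P"
proof -
  have "card (\<Union>P) = (\<Sum>b\<in>P. card b)"
    using assms by (intro card_Union_disjoint) (auto simp: dblocks_def pairwise_def disjnt_def card2D)
  also have "\<dots> = (\<Sum>b\<in>P. 2)" using assms by (intro sum.cong) (auto simp: dblocks_def)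
  finally show ?thesis by simp
qed

lemma pairing_finite: "pairing n P \<Longrightarrow> finite P"
  by (auto simp: pairing_iff intro: dblocks_finite_Union)

lemma pairing_card: "pairing n P \<Longrightarrow> card P = n"
  using card_Union_dblocks[of P] pairing_finite[of n P] by (auto simp: pairing_iff)

lemma finite_pairings: "finite {P. pairing n P}"
proof (rule finite_subset)
  show "{P. pairing n P} \<subseteq> Pow (Pow {1..2*n})" by (auto simp: pairing_iff)
qed auto

lemma finite_pairings': "finite {P. pairing n P \<and> Q P}"
  by (rule finite_subset[OF _ finite_pairings]) auto

definition rk :: "nat set \<Rightarrow> nat \<Rightarrow> nat" where "rk A x = card {y\<in>A. y < x}"

lemma rk_mono: "finite A \<Longrightarrow> mono (rk A)"
  unfolding rk_def by (intro monoI card_mono) auto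

lemma rk_less: assumes "finite A" "x \<in> A" "x < y" shows "rk A x < rk A y"
  unfolding rk_def using assms by (intro psubset_card_mono) auto

lemma rk_le_card: "finite A \<Longrightarrow> rk A x \<le> card A"
  unfolding rk_def by (intro card_mono) auto

lemma rk_lt_card: "finite A \<Longrightarrow> x \<in> A \<Longrightarrow> rk A x < card A"
  unfolding rk_def by (intro psubset_card_mono) auto

lemma rk_inj: "finite A \<Longrightarrow> inj_on (rk A) A"
  by (intro inj_onI) (metis linorder_neqE_nat less_irrefl rk_less)

lemma rk_image: assumes "finite A" shows "rk A ` A = {..<card A}"
proof -
  have "rk A ` A \<subseteq> {..<card A}" using rk_lt_card[OF assms] by auto
  moreover have "card (rk A ` A) = card {..<card A}" using card_image[OF rk_inj[OF assms]] by simp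
  ultimately show ?thesis by (intro card_subset_eq) auto
qed

lemma rk_big: assumes "finite A" "\<forall>a\<in>A. a < x" shows "rk A x = card A"
  unfolding rk_def using assms by (intro arg_cong[where f=card]) auto

definition posf :: "nat list \<Rightarrow> nat \<Rightarrow> nat" where
  "posf ms c = c + 2 * sum_list (take (c - 1) ms)"

lemma sum_take_Suc: "sum_list (take (Suc k) ms) = sum_list (take k ms) + (if k < length ms then ms!k else 0)"
  by (simp add: take_Suc_conv_app_nth)

lemma posf_Suc: "posf ms (Suc (Suc c)) = posf ms (Suc c) + 1 + 2 * (if c < length ms then ms!c else 0)"
  unfolding posf_def by (simp add: sum_take_Suc)

lemma posf_0[simp]: "posf ms 0 = 0" and posf_1[simp]: "posf ms 1 = 1"
  by (simp_all add: posf_def)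

lemma posf_strict: "strict_mono (posf ms)"
  unfolding strict_mono_Suc_iff
proof
  fix c show "posf ms c < posf ms (Suc c)"
    by (cases c) (simp_all add: posf_def sum_take_Suc)
qed

lemma posf_mono: "mono (posf ms)"
  using posf_strict strict_mono_mono by blast

lemma posf_parity: "even (posf ms c) = even c"
  by (simp add: posf_def)

lemma posf_inj: "inj (posf ms)"
  using posf_strict strict_mono_imp_inj_on by blast

lemma crosses_sym: "crosses x y = crosses y x"
  unfolding crosses_def by auto

lemma crosses_irrefl: "\<not> crosses x x"
  unfolding crosses_def by auto

lemma mono_inj_less: fixes f :: "nat \<Rightarrow> nat" assumes "mono f" "inj_on f S" "a \<in> S" "b \<in> S"
  shows "f a < f b \<longleftrightarrow> a < b"
proof
  assume "a < b" then have "f a \<le> f b" using monoD[OF assms(1), of a b] by simp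
  moreover have "f a \<noteq> f b" using \<open>a < b\<close> assms(2-4) inj_on_contraD by fastforce
  ultimately show "f a < f b" by simp
next
  assume "f a < f b" 
  show "a < b"
  proof (rule ccontr)
    assume "\<not> a < b" then have "b \<le> a" by simp
    then have "f b \<le> f a" using monoD[OF assms(1), of b a] by simp
    then show False using \<open>f a < f b\<close> by simp
  qed
qed

lemma crosses_image: fixes f :: "nat \<Rightarrow> nat" assumes "mono f" "inj_on f S" "x \<subseteq> S" "y \<subseteq> S" "card x = 2" "card y = 2"
  shows "crosses (f ` x) (f ` y) = crosses x y"
proof -
  have fx: "finite x" "x \<noteq> {}" "finite y" "y \<noteq> {}" using card2D(1,2) assms(5,6) by blast+
  have m: "Min (f ` x) = f (Min x)" "Max (f ` x) = f (Max x)" "Min (f ` y) = f (Min y)" "Max (f ` y) = f (Max y)"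
    by (rule sym, rule mono_Min_commute[OF assms(1) fx(1,2)]) (rule sym, rule mono_Max_commute[OF assms(1) fx(1,2)],
        rule sym, rule mono_Min_commute[OF assms(1) fx(3,4)], rule sym, rule mono_Max_commute[OF assms(1) fx(3,4)])
  have S: "Min x \<in> S" "Max x \<in> S" "Min y \<in> S" "Max y \<in> S" using assms(3-6) card2D(5,6) by blast+
  note l = mono_inj_less[OF assms(1,2)]
  show ?thesis unfolding crosses_def m by (simp only: l[OF S(1) S(3)] l[OF S(3) S(1)] l[OF S(3) S(2)] l[OF S(2) S(4)]
      l[OF S(1) S(4)] l[OF S(4) S(2)])
qed

definition crpairs :: "nat set set \<Rightarrow> (nat set \<times> nat set) set" where
  "crpairs P = {(x, y). x \<in> P \<and> y \<in> P \<and> Min x < Min y \<and> crosses x y}"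

lemma crossings_crpairs: "crossings P = card (crpairs P)"
  unfolding crossings_def crpairs_def by simp

lemma finite_crpairs: "finite P \<Longrightarrow> finite (crpairs P)"
  unfolding crpairs_def by (rule finite_subset[of _ "P \<times> P"]) auto

lemma dblocks_image: assumes "dblocks P" "inj_on f (\<Union>P)" shows "dblocks (image f ` P)"
  unfolding dblocks_def
proof (intro conjI ballI impI)
  fix b assume "b \<in> image f ` P"
  then obtain c where c: "c \<in> P" "b = f ` c" by auto
  have "inj_on f c" using assms(2) c(1) by (meson Union_upper inj_on_subset)
  then show "card b = 2" using c assms(1) by (simp add: card_image dblocks_def)
next
  fix b b' assume "b \<in> image f ` P" "b' \<in> image f ` P" "b \<noteq> b'"
  then obtain c c' where c: "c \<in> P" "b = f ` c" "c' \<in> P" "b' = f ` c'" by auto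
  with \<open>b \<noteq> b'\<close> have "c \<noteq> c'" by auto
  then have "c \<inter> c' = {}" using assms(1) c by (auto simp: dblocks_def)
  then show "b \<inter> b' = {}" using c assms(2) unfolding inj_on_def by blast
qed

lemma crossings_image: fixes f :: "nat \<Rightarrow> nat" assumes "mono f" "inj_on f (\<Union>P)" "dblocks P" "finite P"
  shows "crossings (image f ` P) = crossings P"
proof -
  have c2: "\<And>b. b \<in> P \<Longrightarrow> card b = 2" using assms(3) by (auto simp: dblocks_def)
  have inj: "inj_on (image f) P" using assms(2) by (metis Pow_iff Union_upper inj_on_image inj_on_subset subsetI)
  have mn: "\<And>b. b \<in> P \<Longrightarrow> Min (f ` b) = f (Min b)"
    using mono_Min_commute[OF assms(1)] card2D(1,2) c2 by metis
  have lt: "\<And>x y. x \<in> P \<Longrightarrow> y \<in> P \<Longrightarrow> f (Min x) < f (Min y) \<longleftrightarrow> Min x < Min y"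
    using mono_inj_less[OF assms(1,2)] card2D(5) c2 by blast
  have cr: "\<And>x y. x \<in> P \<Longrightarrow> y \<in> P \<Longrightarrow> crosses (f ` x) (f ` y) = crosses x y"
    using crosses_image[OF assms(1,2)] c2 by blast
  have "crpairs (image f ` P) = (\<lambda>(x,y). (f ` x, f ` y)) ` crpairs P"
    unfolding crpairs_def using mn lt cr by (auto simp: image_iff) 
  moreover have "inj_on (\<lambda>(x,y). (f ` x, f ` y)) (crpairs P)"
    using inj unfolding crpairs_def inj_on_def by auto
  ultimately show ?thesis unfolding crossings_crpairs by (simp add: card_image)
qed

lemma crossings_Un: assumes "finite A" "finite B" "A \<inter> B = {}" "\<And>x y. x \<in> A \<Longrightarrow> y \<in> B \<Longrightarrow> \<not> crosses x y"
  shows "crossings (A \<union> B) = crossings A + crossings B"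
proof -
  have "crpairs (A \<union> B) = crpairs A \<union> crpairs B"
    unfolding crpairs_def using assms(4) crosses_sym by blast
  moreover have "crpairs A \<inter> crpairs B = {}" using assms(3) unfolding crpairs_def by auto
  ultimately show ?thesis unfolding crossings_crpairs
    by (simp add: card_Un_disjoint finite_crpairs assms)
qed

lemma crossings_UN: assumes "finite I" "\<And>j. j \<in> I \<Longrightarrow> finite (Q j)"
  "\<And>j k. j \<in> I \<Longrightarrow> k \<in> I \<Longrightarrow> j \<noteq> k \<Longrightarrow> Q j \<inter> Q k = {}"
  "\<And>j k x y. j \<in> I \<Longrightarrow> k \<in> I \<Longrightarrow> j \<noteq> k \<Longrightarrow> x \<in> Q j \<Longrightarrow> y \<in> Q k \<Longrightarrow> \<not> crosses x y"
  shows "crossings (\<Union>j\<in>I. Q j) = (\<Sum>j\<in>I. crossings (Q j))"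
proof -
  have "crpairs (\<Union>j\<in>I. Q j) = (\<Union>j\<in>I. crpairs (Q j))"
    unfolding crpairs_def using assms(4) by blast
  moreover have "card (\<Union>j\<in>I. crpairs (Q j)) = (\<Sum>j\<in>I. card (crpairs (Q j)))"
    using assms(1,2,3) by (intro card_UN_disjoint) (auto simp: finite_crpairs, auto simp: crpairs_def)
  ultimately show ?thesis unfolding crossings_crpairs by simp
qed

lemma pr_image: assumes "parity_reversing P" "\<And>x. x \<in> \<Union>P \<Longrightarrow> even (g x) = (even x = e)"
  shows "parity_reversing (image g ` P)"
  unfolding parity_reversing_def
proof
  fix b assume "b \<in> image g ` P"
  then obtain c where c: "c \<in> P" "b = g ` c" by auto
  then obtain x y where xy: "x \<in> c" "y \<in> c" "odd x" "even y" using assms(1) by (auto simp: parity_reversing_def)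
  have "even (g x) = (even x = e)" "even (g y) = (even y = e)" using assms(2) xy c by auto
  then show "\<exists>x\<in>b. \<exists>y\<in>b. odd x \<and> even y" using xy c
    by (cases e) auto
qed

definition crel :: "nat set set \<Rightarrow> (nat set \<times> nat set) set" where
  "crel P = {(x,y). x \<in> P \<and> y \<in> P \<and> crosses x y}"

lemma conn_reach: assumes "connected_pairing Q" "b0 \<in> Q" "b \<in> Q"
  shows "(b0, b) \<in> (crel Q)\<^sup>*"
proof (rule ccontr)
  assume nb: "(b0, b) \<notin> (crel Q)\<^sup>*"
  define C1 where "C1 = {x\<in>Q. (b0, x) \<in> (crel Q)\<^sup>*}"
  define C2 where "C2 = Q - C1"
  have "C1 \<noteq> {}" using assms(2) unfolding C1_def by auto
  moreover have "C2 \<noteq> {}" using assms(3) nb unfolding C2_def C1_def by auto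
  moreover have "\<forall>x\<in>C1. \<forall>y\<in>C2. \<not> crosses x y"
  proof (intro ballI notI)
    fix x y assume "x \<in> C1" "y \<in> C2" "crosses x y"
    then have "(b0, y) \<in> (crel Q)\<^sup>*" unfolding C1_def C2_def crel_def
      by (auto intro: rtrancl_into_rtrancl)
    then show False using \<open>y \<in> C2\<close> unfolding C1_def C2_def by auto
  qed
  moreover have "C1 \<union> C2 = Q" "C1 \<inter> C2 = {}" unfolding C1_def C2_def by auto
  ultimately show False using assms(1) unfolding connected_pairing_def by blast
qed

lemma reach_conn: assumes "b0 \<in> Q" "\<And>b. b \<in> Q \<Longrightarrow> (b0, b) \<in> (crel Q)\<^sup>*"
  shows "connected_pairing Q"
  unfolding connected_pairing_def
proof
  assume "\<exists>C1 C2. C1 \<noteq> {} \<and> C2 \<noteq> {} \<and> C1 \<union> C2 = Q \<and> C1 \<inter> C2 = {} \<and> (\<forall>x\<in>C1. \<forall>y\<in>C2. \<not> crosses x y)"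
  then obtain C1 C2 where C: "C1 \<noteq> {}" "C2 \<noteq> {}" "C1 \<union> C2 = Q" "C1 \<inter> C2 = {}"
     "\<forall>x\<in>C1. \<forall>y\<in>C2. \<not> crosses x y" by blast
  have key: "\<And>D1 D2. D1 \<union> D2 = Q \<Longrightarrow> D1 \<inter> D2 = {} \<Longrightarrow> (\<forall>x\<in>D1. \<forall>y\<in>D2. \<not> crosses x y) \<Longrightarrow> b0 \<in> D1 \<Longrightarrow> D2 = {}"
  proof -
    fix D1 D2 assume D: "D1 \<union> D2 = Q" "D1 \<inter> D2 = {}" "\<forall>x\<in>D1. \<forall>y\<in>D2. \<not> crosses x y" "b0 \<in> D1"
    have "(b0, b) \<in> (crel Q)\<^sup>* \<Longrightarrow> b \<in> D1" for b
    proof (induction rule: rtrancl_induct)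
      case base then show ?case using D by simp
    next
      case (step y z)
      then have "z \<in> Q" "crosses y z" by (auto simp: crel_def)
      then show ?case using D step by blast
    qed
    then show "D2 = {}" using assms(2) D by blast
  qed
  show False
  proof (cases "b0 \<in> C1")
    case True then show ?thesis using key[OF C(3,4,5)] C(2) by simp
  next
    case False
    then have "b0 \<in> C2" using C(3) assms(1) by auto
    moreover have "\<forall>x\<in>C2. \<forall>y\<in>C1. \<not> crosses x y" using C(5) crosses_sym by blast
    ultimately show ?thesis using key[of C2 C1] C by blast
  qed
qed

lemma conn_image: assumes "connected_pairing Q" "\<And>x y. x \<in> Q \<Longrightarrow> y \<in> Q \<Longrightarrow> crosses (g x) (g y) = crosses x y"
  shows "connected_pairing (g ` Q)"
  unfolding connected_pairing_def
proof
  assume "\<exists>C1 C2. C1 \<noteq> {} \<and> C2 \<noteq> {} \<and> C1 \<union> C2 = g ` Q \<and> C1 \<inter> C2 = {} \<and> (\<forall>x\<in>C1. \<forall>y\<in>C2. \<not> crosses x y)"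
  then obtain C1 C2 where C: "C1 \<noteq> {}" "C2 \<noteq> {}" "C1 \<union> C2 = g ` Q" "C1 \<inter> C2 = {}"
     "\<forall>x\<in>C1. \<forall>y\<in>C2. \<not> crosses x y" by blast
  define D1 where "D1 = {x\<in>Q. g x \<in> C1}"
  define D2 where "D2 = {x\<in>Q. g x \<in> C2}"
  have h1: "\<And>c. c \<in> C1 \<union> C2 \<Longrightarrow> \<exists>x\<in>Q. c = g x" using C(3) by (simp add: image_iff)
  have h2: "\<And>x. x \<in> Q \<Longrightarrow> g x \<in> C1 \<union> C2" using C(3) by simp
  have "D1 \<noteq> {}" using C(1) h1 unfolding D1_def by fastforce
  moreover have "D2 \<noteq> {}" using C(2) h1 unfolding D2_def by fastforce
  moreover have "D1 \<union> D2 = Q" using h2 unfolding D1_def D2_def by auto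
  moreover have "D1 \<inter> D2 = {}" using C(4) unfolding D1_def D2_def by blast
  moreover have "\<forall>x\<in>D1. \<forall>y\<in>D2. \<not> crosses x y"
  proof (intro ballI)
    fix x y assume "x \<in> D1" "y \<in> D2"
    then have "\<not> crosses (g x) (g y)" using C(5) unfolding D1_def D2_def by blast
    then show "\<not> crosses x y" using assms(2) \<open>x \<in> D1\<close> \<open>y \<in> D2\<close> unfolding D1_def D2_def by blast
  qed
  ultimately show False using assms(1) unfolding connected_pairing_def by blast
qed

lemma rtrancl_map: assumes "(a, b) \<in> r\<^sup>*" "\<And>x y. (x, y) \<in> r \<Longrightarrow> (h x, h y) \<in> s"
  shows "(h a, h b) \<in> s\<^sup>*"
  using assms(1)
proof (induction rule: rtrancl_induct)
  case base then show ?case by simp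
next
  case (step y z) show ?case using step(3) assms(2)[OF step(2)] by (rule rtrancl.rtrancl_into_rtrancl)
qed

definition PRS :: "nat \<Rightarrow> nat set set set" where
  "PRS n = {P. pairing n P \<and> parity_reversing P}"
definition COS :: "nat \<Rightarrow> nat set set set" where
  "COS n = {P. pairing n P \<and> parity_reversing P \<and> connected_pairing P}"
definition GL :: "nat \<Rightarrow> nat \<Rightarrow> (nat \<times> nat set set) list set" where
  "GL k m = {gs. length gs = k \<and> (\<forall>g\<in>set gs. snd g \<in> PRS (fst g)) \<and> sum_list (map fst gs) = m}"

definition wl :: "(nat \<Rightarrow> 'a::comm_ring_1) \<Rightarrow> (nat \<times> nat set set) list \<Rightarrow> 'a" where
  "wl \<phi> gs = prod_list (map (\<lambda>g. \<phi> (crossings (snd g))) gs)"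

definition Sf :: "(nat \<Rightarrow> 'a::comm_ring_1) \<Rightarrow> 'a fps" where
  "Sf \<phi> = Abs_fps (\<lambda>n. \<Sum>P\<in>PRS n. \<phi> (crossings P))"
definition Tf :: "(nat \<Rightarrow> 'a::comm_ring_1) \<Rightarrow> 'a fps" where
  "Tf \<phi> = Abs_fps (\<lambda>n. \<Sum>P\<in>COS n. \<phi> (crossings P))"

lemma finite_PRS: "finite (PRS n)" unfolding PRS_def by (rule finite_pairings')
lemma finite_COS: "finite (COS n)" unfolding COS_def by (rule finite_pairings')

lemma finite_GL: "finite (GL k m)"
proof (rule finite_subset)
  show "GL k m \<subseteq> {gs. set gs \<subseteq> Sigma {..m} PRS \<and> length gs = k}"
  proof
    fix gs assume gs: "gs \<in> GL k m"
    have "set gs \<subseteq> Sigma {..m} PRS"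
    proof
      fix g assume g: "g \<in> set gs"
      then have "fst g \<le> sum_list (map fst gs)" by (auto intro!: member_le_sum_list)
      then show "g \<in> Sigma {..m} PRS" using gs g unfolding GL_def by (cases g) auto
    qed
    then show "gs \<in> {gs. set gs \<subseteq> Sigma {..m} PRS \<and> length gs = k}" using gs unfolding GL_def by auto
  qed
  show "finite {gs. set gs \<subseteq> Sigma {..m} PRS \<and> length gs = k}"
    by (intro finite_lists_length_eq finite_SigmaI) (auto simp: finite_PRS)
qed

lemma GL_0: "GL 0 m = (if m = 0 then {[]} else {})"
  unfolding GL_def by auto

lemma GL_Suc_sum: "(\<Sum>gs\<in>GL (Suc k) m. f gs) =
   (\<Sum>(a, P, gs)\<in>Sigma {0..m} (\<lambda>a. PRS a \<times> GL k (m - a)). f ((a, P) # gs))"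
proof (rule sum.reindex_bij_witness[where i = "\<lambda>(a, P, gs). (a, P) # gs" and j = "\<lambda>gs. (fst (hd gs), snd (hd gs), tl gs)"])
  fix gs assume "gs \<in> GL (Suc k) m"
  then obtain g gs' where gs: "gs = g # gs'" unfolding GL_def by (cases gs) auto
  then show "(case (fst (hd gs), snd (hd gs), tl gs) of (a, P, gs) \<Rightarrow> (a, P) # gs) = gs" by simp
  show "(fst (hd gs), snd (hd gs), tl gs) \<in> Sigma {0..m} (\<lambda>a. PRS a \<times> GL k (m - a))"
    using \<open>gs \<in> GL (Suc k) m\<close> unfolding gs GL_def by auto
  show "(case (fst (hd gs), snd (hd gs), tl gs) of (a, P, gs) \<Rightarrow> f ((a, P) # gs)) = f gs"
    unfolding gs by simp
next
  fix t assume t: "t \<in> Sigma {0..m} (\<lambda>a. PRS a \<times> GL k (m - a))"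
  then obtain a P gs where tt: "t = (a, P, gs)" by (cases t) auto
  show "(fst (hd (case t of (a, P, gs) \<Rightarrow> (a, P) # gs)), snd (hd (case t of (a, P, gs) \<Rightarrow> (a, P) # gs)),
          tl (case t of (a, P, gs) \<Rightarrow> (a, P) # gs)) = t" unfolding tt by simp
  show "(case t of (a, P, gs) \<Rightarrow> (a, P) # gs) \<in> GL (Suc k) m"
    using t unfolding tt GL_def by auto
qed

lemma Sf_nth: "Sf \<phi> $ n = (\<Sum>P\<in>PRS n. \<phi> (crossings P))" by (simp add: Sf_def)
lemma Tf_nth: "Tf \<phi> $ n = (\<Sum>P\<in>COS n. \<phi> (crossings P))" by (simp add: Tf_def)

lemma Sf_power_nth: "(Sf \<phi> ^ k) $ m = (\<Sum>gs\<in>GL k m. wl \<phi> gs)"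
proof (induction k arbitrary: m)
  case 0 then show ?case by (simp add: GL_0 wl_def)
next
  case (Suc k)
  have "(Sf \<phi> ^ Suc k) $ m = (\<Sum>a=0..m. Sf \<phi> $ a * (Sf \<phi> ^ k) $ (m - a))"
    by (simp add: fps_mult_nth)
  also have "\<dots> = (\<Sum>a=0..m. \<Sum>(P, gs)\<in>PRS a \<times> GL k (m - a). \<phi> (crossings P) * wl \<phi> gs)"
    by (simp add: Sf_nth Suc.IH sum_product sum.cartesian_product)
  also have "\<dots> = (\<Sum>(a, P, gs)\<in>Sigma {0..m} (\<lambda>a. PRS a \<times> GL k (m - a)). \<phi> (crossings P) * wl \<phi> gs)"
    by (subst sum.Sigma) (auto simp: finite_PRS finite_GL)
  also have "\<dots> = (\<Sum>gs\<in>GL (Suc k) m. wl \<phi> gs)"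
    by (subst GL_Suc_sum) (simp add: wl_def case_prod_beta)
  finally show ?case .
qed

definition SIG :: "nat \<Rightarrow> (nat \<times> nat set set \<times> (nat \<times> nat set set) list) set" where
  "SIG n = Sigma {0..n} (\<lambda>i. COS i \<times> GL (2 * i) (n - i))"

lemma generic_fps:
  fixes \<phi> :: "nat \<Rightarrow> 'a::comm_ring_1"
  assumes decomp: "\<And>n. (\<Sum>P\<in>PRS n. \<phi> (crossings P)) = (\<Sum>(i, C, gs)\<in>SIG n. \<phi> (crossings C) * wl \<phi> gs)"
  shows "Sf \<phi> = Tf \<phi> oo (fps_X * Sf \<phi> ^ 2)"
proof (rule fps_ext)
  fix n
  have "(Tf \<phi> oo (fps_X * Sf \<phi> ^ 2)) $ n = (\<Sum>i=0..n. Tf \<phi> $ i * ((fps_X * Sf \<phi> ^ 2) ^ i) $ n)"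
    by (simp add: fps_compose_nth)
  also have "\<dots> = (\<Sum>i=0..n. Tf \<phi> $ i * (Sf \<phi> ^ (2 * i)) $ (n - i))"
  proof (intro sum.cong refl)
    fix i assume "i \<in> {0..n}"
    have "(fps_X * Sf \<phi> ^ 2) ^ i = fps_X ^ i * Sf \<phi> ^ (2 * i)"
      by (simp add: power_mult_distrib power_mult)
    then show "Tf \<phi> $ i * ((fps_X * Sf \<phi> ^ 2) ^ i) $ n = Tf \<phi> $ i * (Sf \<phi> ^ (2 * i)) $ (n - i)"
      using \<open>i \<in> {0..n}\<close> by (simp add: fps_X_power_mult_nth)
  qed
  also have "\<dots> = (\<Sum>i=0..n. \<Sum>(C, gs)\<in>COS i \<times> GL (2 * i) (n - i). \<phi> (crossings C) * wl \<phi> gs)"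
    by (simp add: Tf_nth Sf_power_nth sum_product sum.cartesian_product)
  also have "\<dots> = (\<Sum>(i, C, gs)\<in>SIG n. \<phi> (crossings C) * wl \<phi> gs)"
    unfolding SIG_def by (subst sum.Sigma) (auto simp: finite_COS finite_GL)
  also have "\<dots> = Sf \<phi> $ n" by (simp add: Sf_nth decomp)
  finally show "Sf \<phi> $ n = (Tf \<phi> oo (fps_X * Sf \<phi> ^ 2)) $ n" by simp
qed

definition GB :: "nat \<Rightarrow> nat list \<Rightarrow> nat set set" where
  "GB n xs = (\<lambda>k. {2*k+1, 2*(xs!k)}) ` {..<n}"

definition LL :: "nat \<Rightarrow> nat list set" where
  "LL n = {xs. length xs = n \<and> distinct xs \<and> set xs \<subseteq> {1..n}}"

lemma card_LL: "card (LL n) = fact n"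
proof -
  have "card (LL n) = \<Prod>{card {1..n} - n + 1 .. card {1..n}}"
    unfolding LL_def by (rule card_lists_distinct_length_eq) auto
  then show ?thesis by (simp add: fact_prod)
qed

lemma LL_set: assumes "xs \<in> LL n" shows "set xs = {1..n}"
proof -
  have "card (set xs) = n" using assms unfolding LL_def by (simp add: distinct_card)
  then show ?thesis using assms unfolding LL_def by (intro card_subset_eq) auto
qed

lemma odd_ne_even: "2 * k + 1 \<noteq> 2 * (m::nat)" by presburger

lemma GB_PRS: assumes xs: "xs \<in> LL n" shows "GB n xs \<in> PRS n"
proof -
  have len: "length xs = n" and dist: "distinct xs" using xs by (auto simp: LL_def)
  have setx: "set xs = {1..n}" using LL_set[OF xs] .
  have db: "dblocks (GB n xs)" unfolding dblocks_def GB_def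
  proof (intro conjI ballI impI)
    fix b assume "b \<in> (\<lambda>k. {2*k+1, 2*(xs!k)}) ` {..<n}"
    then obtain k where "b = {2*k+1, 2*(xs!k)}" by auto
    then show "card b = 2" using odd_ne_even[of k "xs!k"] by simp
  next
    fix b c assume "b \<in> (\<lambda>k. {2*k+1, 2*(xs!k)}) ` {..<n}" "c \<in> (\<lambda>k. {2*k+1, 2*(xs!k)}) ` {..<n}" "b \<noteq> c"
    then obtain k l where kl: "b = {2*k+1, 2*(xs!k)}" "c = {2*l+1, 2*(xs!l)}" "k < n" "l < n" by auto
    with \<open>b \<noteq> c\<close> have "k \<noteq> l" by auto
    then have "xs!k \<noteq> xs!l" using dist kl len by (simp add: nth_eq_iff_index_eq)
    then show "b \<inter> c = {}" using kl \<open>k \<noteq> l\<close> odd_ne_even[of k "xs!l"] odd_ne_even[of l "xs!k"] by auto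
  qed
  have un: "\<Union>(GB n xs) = {1..2*n}"
  proof
    show "\<Union>(GB n xs) \<subseteq> {1..2*n}"
    proof
      fix y assume "y \<in> \<Union>(GB n xs)"
      then obtain k where k: "k < n" "y = 2*k+1 \<or> y = 2*(xs!k)" unfolding GB_def by auto
      have "xs!k \<in> {1..n}" using k(1) len setx by (metis nth_mem)
      then show "y \<in> {1..2*n}" using k by auto
    qed
  next
    show "{1..2*n} \<subseteq> \<Union>(GB n xs)"
    proof
      fix y assume y: "y \<in> {1..2*n}"
      show "y \<in> \<Union>(GB n xs)"
      proof (cases "even y")
        case True
        then obtain m where m: "y = 2*m" by blast
        then have "m \<in> set xs" using y setx by auto
        then obtain k where "k < n" "xs!k = m" using len by (metis in_set_conv_nth)
        then show ?thesis using m unfolding GB_def by auto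
      next
        case False
        then obtain k where k: "y = 2*k+1" by (metis oddE)
        then have "k < n" using y by auto
        then show ?thesis using k unfolding GB_def by auto
      qed
    qed
  qed
  have pr: "parity_reversing (GB n xs)" unfolding parity_reversing_def GB_def
    by auto
  show ?thesis using db un pr unfolding PRS_def pairing_iff by simp
qed

lemma GB_inj: "inj_on (GB n) (LL n)"
proof (rule inj_onI)
  fix xs ys assume xs: "xs \<in> LL n" and ys: "ys \<in> LL n" and eq: "GB n xs = GB n ys"
  have len: "length xs = n" "length ys = n" using xs ys by (auto simp: LL_def)
  show "xs = ys"
  proof (rule nth_equalityI)
    show "length xs = length ys" using len by simp
    fix k assume "k < length xs"
    then have "{2*k+1, 2*(xs!k)} \<in> GB n ys" using eq len unfolding GB_def by auto
    then obtain l where l: "{2*k+1, 2*(xs!k)} = {2*l+1, 2*(ys!l)}" unfolding GB_def by auto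
    then have "2*k+1 = 2*l+1" using odd_ne_even[of k "ys!l"] by (metis doubleton_eq_iff)
    then show "xs!k = ys!k" using l odd_ne_even[of k "ys!l"] odd_ne_even[of l "xs!k"] by (metis doubleton_eq_iff add_right_cancel mult_left_cancel zero_neq_numeral)
  qed
qed

definition par :: "nat set set \<Rightarrow> nat \<Rightarrow> nat" where
  "par P x = (THE y. even y \<and> {x, y} \<in> P)"

lemma PRS_block: assumes "P \<in> PRS n" "b \<in> P" "odd x" "x \<in> b" shows "\<exists>y. even y \<and> b = {x, y}"
proof -
  have c2: "card b = 2" using assms(1,2) unfolding PRS_def pairing_def by auto
  obtain u v where uv: "u \<in> b" "v \<in> b" "odd u" "even v" using assms(1,2) unfolding PRS_def parity_reversing_def by blast
  obtain p q where pq: "b = {p, q}" "p \<noteq> q" using c2 by (auto simp: card_2_iff)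
  have "u \<noteq> v" using uv by auto
  then have "b = {u, v}" using pq uv by auto
  then have "x = u" using assms(3,4) uv by auto
  then show ?thesis using \<open>b = {u, v}\<close> uv by blast
qed

lemma PRS_disj: assumes "P \<in> PRS n" "b \<in> P" "c \<in> P" "x \<in> b" "x \<in> c" shows "b = c"
  using assms unfolding PRS_def pairing_def by blast

lemma par_prop: assumes "P \<in> PRS n" "odd x" "x \<in> {1..2*n}"
  shows "even (par P x) \<and> {x, par P x} \<in> P"
proof -
  have "x \<in> \<Union>P" using assms unfolding PRS_def pairing_def by auto
  then obtain b where b: "b \<in> P" "x \<in> b" by auto
  then obtain y where y: "even y" "b = {x, y}" using PRS_block assms by blast
  have "\<exists>!y. even y \<and> {x, y} \<in> P"
  proof
    show "even y \<and> {x, y} \<in> P" using y b by simp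
    fix y' assume y': "even y' \<and> {x, y'} \<in> P"
    then have "{x, y'} = {x, y}" using PRS_disj[OF assms(1), of "{x,y'}" "{x,y}" x] y b by auto
    then show "y' = y" using y y' assms(2) by (metis doubleton_eq_iff)
  qed
  then show ?thesis unfolding par_def by (rule theI')
qed

lemma GB_surj: assumes P: "P \<in> PRS n" shows "\<exists>xs\<in>LL n. GB n xs = P"
proof -
  define xs where "xs = map (\<lambda>k. par P (2*k+1) div 2) [0..<n]"
  have pk: "\<And>k. k < n \<Longrightarrow> even (par P (2*k+1)) \<and> {2*k+1, par P (2*k+1)} \<in> P"
    by (rule par_prop[OF P]) auto
  have inU: "\<And>k. k < n \<Longrightarrow> par P (2*k+1) \<in> {1..2*n}"
  proof -
    fix k assume "k < n"
    then have "par P (2*k+1) \<in> \<Union>P" using pk by blast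
    then show "par P (2*k+1) \<in> {1..2*n}" using P unfolding PRS_def pairing_def by auto
  qed
  have xsk: "\<And>k. k < n \<Longrightarrow> 2 * (xs!k) = par P (2*k+1)"
    unfolding xs_def using pk by auto
  have "distinct xs"
    unfolding distinct_conv_nth
  proof (intro allI impI)
    fix k l assume kl: "k < length xs" "l < length xs" "k \<noteq> l"
    then have kl': "k < n" "l < n" unfolding xs_def by auto
    show "xs!k \<noteq> xs!l"
    proof
      assume "xs!k = xs!l"
      then have e: "par P (2*k+1) = par P (2*l+1)" using xsk kl' by metis
      have m1: "{2*k+1, par P (2*k+1)} \<in> P" using pk kl' by blast
      have m2: "{2*l+1, par P (2*k+1)} \<in> P" using pk kl' e by metis
      have "{2*k+1, par P (2*k+1)} = {2*l+1, par P (2*k+1)}"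
        by (rule PRS_disj[OF P m1 m2, of "par P (2*k+1)"]) simp_all
      then have "{2*k+1, par P (2*k+1)} = {2*l+1, par P (2*l+1)}" using e by simp
      then have "2*k+1 \<in> {2*l+1, par P (2*l+1)}" by blast
      moreover have "2*k+1 \<noteq> par P (2*l+1)"
      proof
        assume "2*k+1 = par P (2*l+1)"
        then have "even (2*k+1)" using pk[OF kl'(2)] by simp
        then show False by simp
      qed
      ultimately have "2*k+1 = 2*l+1" by blast
      then show False using kl by simp
    qed
  qed
  moreover have "set xs \<subseteq> {1..n}"
  proof
    fix m assume "m \<in> set xs"
    then obtain k where k: "k < n" "m = xs!k" unfolding xs_def by auto
    then show "m \<in> {1..n}" using inU[OF k(1)] xsk[OF k(1)] by auto
  qed
  moreover have "length xs = n" unfolding xs_def by simp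
  ultimately have L: "xs \<in> LL n" unfolding LL_def by simp
  have "GB n xs = P"
  proof
    show "GB n xs \<subseteq> P" unfolding GB_def using pk xsk by auto
    show "P \<subseteq> GB n xs"
    proof
      fix b assume b: "b \<in> P"
      then obtain x y where xy: "x \<in> b" "y \<in> b" "odd x" "even y"
        using P unfolding PRS_def parity_reversing_def by blast
      have "x \<in> {1..2*n}" using xy b P unfolding PRS_def pairing_def by auto
      moreover have "x = 2*(x div 2)+1" using xy(3) by presburger
      ultimately obtain k where k: "x = 2*k+1" "k < n" by (intro that[of "x div 2"]) auto
      have "b = {2*k+1, par P (2*k+1)}"
        using PRS_disj[OF P b, of "{2*k+1, par P (2*k+1)}" x] pk[OF k(2)] xy k by auto
      then show "b \<in> GB n xs" unfolding GB_def using xsk[OF k(2)] k(2) by auto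
    qed
  qed
  then show ?thesis using L by blast
qed

lemma card_PRS: "card (PRS n) = fact n"
proof -
  have "GB n ` LL n = PRS n" using GB_PRS GB_surj by blast
  then have "card (PRS n) = card (LL n)" using card_image[OF GB_inj] by metis
  then show ?thesis by (simp add: card_LL)
qed

definition b1 :: "nat set set \<Rightarrow> nat set" where "b1 P = (THE b. b \<in> P \<and> 1 \<in> b)"
definition compK :: "nat set set \<Rightarrow> nat set set" where "compK P = {b\<in>P. (b1 P, b) \<in> (crel P)\<^sup>*}"
definition AA :: "nat set set \<Rightarrow> nat set" where "AA P = \<Union>(compK P)"
definition Gj :: "nat set set \<Rightarrow> nat \<Rightarrow> nat set set" where
  "Gj P j = {b \<in> P - compK P. rk (AA P) (Min b) = Suc j}"
definition msD :: "nat set set \<Rightarrow> nat list" where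
  "msD P = map (\<lambda>j. card (Gj P j)) [0..<2 * card (compK P)]"

definition Emb :: "nat set set \<Rightarrow> (nat \<times> nat set set) list \<Rightarrow> nat set set" where
  "Emb C gs = image (posf (map fst gs)) ` C \<union>
     (\<Union>j<length gs. image (\<lambda>y. y + posf (map fst gs) (Suc j)) ` snd (gs!j))"
definition gsD :: "nat set set \<Rightarrow> (nat \<times> nat set set) list" where
  "gsD P = map (\<lambda>j. (card (Gj P j), image (\<lambda>y. y - posf (msD P) (Suc j)) ` Gj P j)) [0..<2 * card (compK P)]"
definition CD :: "nat set set \<Rightarrow> nat set set" where
  "CD P = image (\<lambda>x. rk (AA P) x + 1) ` compK P"
definition Dec :: "nat set set \<Rightarrow> nat \<times> nat set set \<times> (nat \<times> nat set set) list" where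
  "Dec P = (if P = {} then (0, {}, []) else (card (compK P), CD P, gsD P))"

lemma image_minus_interval: "(\<lambda>y. y - s) ` {s<..<s+1+2*c} = {1..2*(c::nat)}"
proof
  show "(\<lambda>y. y - s) ` {s<..<s+1+2*c} \<subseteq> {1..2*c}" by auto
  show "{1..2*c} \<subseteq> (\<lambda>y. y - s) ` {s<..<s+1+2*c}"
  proof
    fix z assume "z \<in> {1..2*c}"
    then have "z + s \<in> {s<..<s+1+2*c}" "z = (z + s) - s" by auto
    then show "z \<in> (\<lambda>y. y - s) ` {s<..<s+1+2*c}" by blast
  qed
qed

lemma even_minus: "(s::nat) \<le> y \<Longrightarrow> even (y - s) = (even y = even s)"
proof -
  assume "s \<le> y"
  then obtain d where "y = s + d" using le_Suc_ex by blast
  then show ?thesis by auto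
qed

lemma out_in_nocross:
  assumes "card y = 2" "card z = 2" "lo < Min z" "Max z < hi"
    "Max y < lo \<or> hi < Min y \<or> (Min y < lo \<and> hi < Max y)"
  shows "\<not> crosses y z"
  using assms unfolding crosses_def by linarith

context
  fixes n P assumes PP: "P \<in> PRS n" and Pne: "P \<noteq> {}"
begin

lemma PPdb: "dblocks P" and PPU: "\<Union>P = {1..2*n}" and PPf: "finite P" and PPpr: "parity_reversing P"
  using PP unfolding PRS_def pairing_iff by (auto intro: pairing_finite[of n] simp: pairing_iff)

lemma blk2: "b \<in> P \<Longrightarrow> card b = 2" using PPdb unfolding dblocks_def by auto

lemma disj: "b \<in> P \<Longrightarrow> c \<in> P \<Longrightarrow> z \<in> b \<Longrightarrow> z \<in> c \<Longrightarrow> b = c"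
  using PPdb unfolding dblocks_def by blast

lemma inU: "b \<in> P \<Longrightarrow> z \<in> b \<Longrightarrow> z \<in> {1..2*n}" using PPU by blast

lemma n_pos: "1 \<le> n"
proof -
  obtain b where "b \<in> P" using Pne by blast
  then have "Min b \<in> {1..2*n}" using inU card2D(5)[OF blk2] by blast
  then show ?thesis by simp
qed

lemma b1_prop: "b1 P \<in> P \<and> 1 \<in> b1 P"
proof -
  have "1 \<in> \<Union>P" using PPU n_pos by simp
  then obtain b where b: "b \<in> P" "1 \<in> b" by blast
  have "\<exists>!b. b \<in> P \<and> 1 \<in> b" using b disj by blast
  then show ?thesis unfolding b1_def by (rule theI')
qed

lemma compK_sub: "compK P \<subseteq> P" unfolding compK_def by auto

lemma b1_comp: "b1 P \<in> compK P" using b1_prop unfolding compK_def by auto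

lemma compK_cross: assumes "x \<in> compK P" "y \<in> P" "crosses x y" shows "y \<in> compK P"
proof -
  have "(x, y) \<in> crel P" using assms compK_sub unfolding crel_def by auto
  then show ?thesis using assms unfolding compK_def by (auto intro: rtrancl_into_rtrancl)
qed

lemma compK_cross': "x \<in> compK P \<Longrightarrow> y \<in> P \<Longrightarrow> crosses y x \<Longrightarrow> y \<in> compK P"
  using compK_cross crosses_sym by blast

lemma AA_sub: "AA P \<subseteq> {1..2*n}" unfolding AA_def using compK_sub inU by blast

lemma AA_fin: "finite (AA P)" using AA_sub finite_subset by blast

lemma one_AA: "1 \<in> AA P" unfolding AA_def using b1_comp b1_prop by blast

lemma nonK_notA: "b \<in> P - compK P \<Longrightarrow> z \<in> b \<Longrightarrow> z \<notin> AA P"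
  unfolding AA_def using disj compK_sub by blast

lemma compK_fin: "finite (compK P)" using compK_sub PPf finite_subset by blast

lemma card_AA: "card (AA P) = 2 * card (compK P)"
proof -
  have "dblocks (compK P)" using PPdb compK_sub unfolding dblocks_def by blast
  then show ?thesis unfolding AA_def using card_Union_dblocks compK_fin by blast
qed

lemma compK_conn: "connected_pairing (compK P)"
proof (rule reach_conn[OF b1_comp])
  fix b assume "b \<in> compK P"
  then have "(b1 P, b) \<in> (crel P)\<^sup>*" unfolding compK_def by auto
  then show "(b1 P, b) \<in> (crel (compK P))\<^sup>*"
  proof (induction rule: rtrancl_induct)
    case base then show ?case by simp
  next
    case (step y z)
    have "y \<in> P" "z \<in> P" using step(2) unfolding crel_def by auto
    then have "y \<in> compK P" "z \<in> compK P" using step(1) rtrancl_into_rtrancl[OF step(1,2)] unfolding compK_def by auto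
    then have "(y, z) \<in> crel (compK P)" using step(2) unfolding crel_def by auto
    then show ?case by (rule rtrancl_into_rtrancl[OF step(3)])
  qed
qed

lemma L1: assumes b: "b \<in> P - compK P" and x: "x \<in> AA P" and lt: "Min b < x" "x < Max b"
  shows False
proof -
  define lo where "lo = Min b"
  define hi where "hi = Max b"
  have bP: "b \<in> P" using b by auto
  have lo1: "1 \<le> lo" unfolding lo_def using inU[OF bP card2D(5)[OF blk2[OF bP]]] by simp
  define In where "In = {k \<in> compK P. lo < Min k \<and> Max k < hi}"
  have out: "Max k < lo \<or> hi < Min k \<or> (Min k < lo \<and> hi < Max k)" if k: "k \<in> compK P" "k \<notin> In" for k
  proof -
    have kP: "k \<in> P" using k compK_sub by blast
    have nc: "\<not> crosses k b" "\<not> crosses b k" using compK_cross[OF k(1) bP] compK_cross'[OF k(1) bP] b by auto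
    have "k \<noteq> b" using k b by auto
    then have ne: "Min k \<noteq> lo" "Min k \<noteq> hi" "Max k \<noteq> lo" "Max k \<noteq> hi"
      unfolding lo_def hi_def using disj[OF kP bP] card2D(5,6)[OF blk2[OF kP]] card2D(5,6)[OF blk2[OF bP]] by metis+
    have mm: "Min k < Max k" "lo < hi" unfolding lo_def hi_def using card2D(3) blk2 kP bP by auto
    show ?thesis using nc ne mm k(2) k(1) unfolding crosses_def In_def lo_def hi_def by auto
  qed
  obtain kx where kx: "kx \<in> compK P" "x \<in> kx" using x unfolding AA_def by blast
  have kxIn: "kx \<in> In"
  proof (rule ccontr)
    assume "kx \<notin> In"
    then have o: "Max kx < lo \<or> hi < Min kx \<or> (Min kx < lo \<and> hi < Max kx)" using out kx(1) by blast
    have "kx \<in> P" using kx compK_sub by blast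
    then have "Min kx \<le> x" "x \<le> Max kx" "x = Min kx \<or> x = Max kx" using card2_mem[OF blk2 kx(2)] by auto
    then show False using o lt unfolding lo_def hi_def by auto
  qed
  have "(b1 P, k) \<in> (crel P)\<^sup>* \<Longrightarrow> k \<notin> In" for k
  proof (induction rule: rtrancl_induct)
    case base
    have "Min (b1 P) \<le> 1" using card2_mem(1) blk2 b1_prop by blast
    then show ?case unfolding In_def using lo1 by auto
  next
    case (step y z)
    have yz: "y \<in> P" "z \<in> P" "crosses y z" using step(2) unfolding crel_def by auto
    have ycomp: "y \<in> compK P" using step(1) yz unfolding compK_def by auto
    have yo: "Max y < lo \<or> hi < Min y \<or> (Min y < lo \<and> hi < Max y)" using out[OF ycomp step(3)] .
    show ?case
    proof
      assume "z \<in> In"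
      then have "lo < Min z" "Max z < hi" unfolding In_def by auto
      then have "\<not> crosses y z" using out_in_nocross[OF blk2[OF yz(1)] blk2[OF yz(2)] _ _ yo] by blast
      then show False using yz by blast
    qed
  qed
  then show False using kxIn kx(1) unfolding compK_def by blast
qed

lemma rk_AA_image: "rk (AA P) ` AA P = {..<2 * card (compK P)}"
  using rk_image[OF AA_fin] card_AA by simp

lemma nonK_rk: assumes b: "b \<in> P - compK P"
  shows "1 \<le> rk (AA P) (Min b)" "rk (AA P) (Min b) \<le> 2 * card (compK P)"
proof -
  have bP: "b \<in> P" using b by auto
  have m: "Min b \<in> b" using card2D(5)[OF blk2[OF bP]] .
  have "Min b \<noteq> 1" using nonK_notA[OF b m] one_AA by auto
  moreover have "1 \<le> Min b" using inU[OF bP m] by simp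
  ultimately have "1 < Min b" by simp
  then have "rk (AA P) 1 < rk (AA P) (Min b)" using rk_less[OF AA_fin one_AA] by blast
  then show "1 \<le> rk (AA P) (Min b)" by simp
  show "rk (AA P) (Min b) \<le> 2 * card (compK P)" using rk_le_card[OF AA_fin] card_AA by metis
qed

lemma Gj_sub: "Gj P j \<subseteq> P - compK P" unfolding Gj_def by auto

lemma Gj_fin: "finite (Gj P j)" using Gj_sub PPf finite_subset by blast

lemma Gj_part: "P - compK P = (\<Union>j<2 * card (compK P). Gj P j)"
proof
  show "P - compK P \<subseteq> (\<Union>j<2 * card (compK P). Gj P j)"
  proof
    fix b assume b: "b \<in> P - compK P"
    define r where "r = rk (AA P) (Min b)"
    have "1 \<le> r" "r \<le> 2 * card (compK P)" using nonK_rk[OF b] unfolding r_def by auto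
    then have "r - 1 < 2 * card (compK P)" "r = Suc (r - 1)" by auto
    then show "b \<in> (\<Union>j<2 * card (compK P). Gj P j)" using b unfolding Gj_def r_def by blast
  qed
qed (auto simp: Gj_def)

lemma Gj_disj: "j \<noteq> l \<Longrightarrow> Gj P j \<inter> Gj P l = {}" unfolding Gj_def by auto

lemma maxlt_iff: assumes x: "x \<in> AA P \<or> x = 2*n+1" and b: "b \<in> P - compK P"
  shows "Max b < x \<longleftrightarrow> rk (AA P) (Min b) \<le> rk (AA P) x"
proof -
  have bP: "b \<in> P" using b by auto
  have mM: "Min b \<in> b" "Max b \<in> b" "Min b < Max b" using card2D(3,5,6)[OF blk2[OF bP]] by auto
  show ?thesis
  proof (cases "x = 2*n+1")
    case True
    have "Max b \<le> 2*n" using inU[OF bP mM(2)] by simp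
    moreover have "rk (AA P) x = card (AA P)" using True AA_sub by (intro rk_big[OF AA_fin]) auto
    ultimately show ?thesis using True rk_le_card[OF AA_fin] by simp
  next
    case False
    then have xA: "x \<in> AA P" using x by simp
    show ?thesis
    proof
      assume "Max b < x"
      then have "Min b \<le> x" using mM by simp
      then show "rk (AA P) (Min b) \<le> rk (AA P) x" using rk_mono[OF AA_fin] unfolding mono_def by blast
    next
      assume le: "rk (AA P) (Min b) \<le> rk (AA P) x"
      show "Max b < x"
      proof (rule ccontr)
        assume "\<not> Max b < x"
        moreover have "Max b \<noteq> x" using nonK_notA[OF b mM(2)] xA by auto
        ultimately have "x < Max b" by simp
        then have "\<not> Min b < x" using L1[OF b xA] by blast
        moreover have "Min b \<noteq> x" using nonK_notA[OF b mM(1)] xA by auto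
        ultimately have "x < Min b" by simp
        then have "rk (AA P) x < rk (AA P) (Min b)" using rk_less[OF AA_fin xA] by blast
        then show False using le by simp
      qed
    qed
  qed
qed

lemma len_msD: "length (msD P) = 2 * card (compK P)" unfolding msD_def by simp

lemma nth_msD: "j < 2 * card (compK P) \<Longrightarrow> msD P ! j = card (Gj P j)" unfolding msD_def by simp

lemma sum_take_msD: assumes "r \<le> 2 * card (compK P)"
  shows "sum_list (take r (msD P)) = (\<Sum>l<r. card (Gj P l))"
proof -
  have "take r (msD P) = map (\<lambda>j. card (Gj P j)) [0..<r]" unfolding msD_def using assms by (simp add: take_map)
  then show ?thesis by (simp add: sum_set_upt_conv_sum_list_nat[symmetric] atLeast0LessThan)
qed

lemma count_below: assumes x: "x \<in> AA P \<or> x = 2*n+1"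
  shows "x = rk (AA P) x + 1 + 2 * sum_list (take (rk (AA P) x) (msD P))"
proof -
  define A where "A = AA P"
  define Q where "Q = {b\<in>P - compK P. Max b < x}"
  have x1: "1 \<le> x" "x \<le> 2*n+1" using x AA_sub by auto
  have seteq: "{1..<x} = {y\<in>A. y < x} \<union> \<Union>Q"
  proof
    show "{1..<x} \<subseteq> {y\<in>A. y < x} \<union> \<Union>Q"
    proof
      fix y assume y: "y \<in> {1..<x}"
      then have "y \<in> \<Union>P" using PPU x1 by auto
      then obtain b where b: "b \<in> P" "y \<in> b" by blast
      show "y \<in> {y\<in>A. y < x} \<union> \<Union>Q"
      proof (cases "b \<in> compK P")
        case True then show ?thesis using b y unfolding A_def AA_def by auto
      next
        case False
        then have bK: "b \<in> P - compK P" using b by auto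
        have "Max b < x"
        proof (cases "x = 2*n+1")
          case True then show ?thesis using inU[OF b(1) card2D(6)[OF blk2[OF b(1)]]] by simp
        next
          case False
          then have xA: "x \<in> AA P" using x by simp
          show ?thesis
          proof (rule ccontr)
            assume "\<not> Max b < x"
            moreover have "Max b \<noteq> x" using nonK_notA[OF bK card2D(6)[OF blk2[OF b(1)]]] xA by auto
            ultimately have "x < Max b" by simp
            moreover have "Min b < x" using card2_mem(1)[OF blk2[OF b(1)] b(2)] y by simp
            ultimately show False using L1[OF bK xA] by blast
          qed
        qed
        then show ?thesis using b bK unfolding Q_def by blast
      qed
    qed
  next
    show "{y\<in>A. y < x} \<union> \<Union>Q \<subseteq> {1..<x}"
    proof
      fix y assume "y \<in> {y\<in>A. y < x} \<union> \<Union>Q"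
      then show "y \<in> {1..<x}"
      proof
        assume "y \<in> {y\<in>A. y < x}" then show ?thesis using AA_sub unfolding A_def by auto
      next
        assume "y \<in> \<Union>Q"
        then obtain b where b: "b \<in> Q" "y \<in> b" by blast
        then have bP: "b \<in> P" "Max b < x" unfolding Q_def by auto
        then show ?thesis using inU[OF bP(1) b(2)] card2_mem(2)[OF blk2[OF bP(1)] b(2)] by auto
      qed
    qed
  qed
  have disjAQ: "{y\<in>A. y < x} \<inter> \<Union>Q = {}" using nonK_notA unfolding Q_def A_def by blast
  have finQ: "finite Q" using PPf unfolding Q_def by auto
  have dbQ: "dblocks Q" using PPdb unfolding Q_def dblocks_def by blast
  have finUQ: "finite (\<Union>Q)" using finQ blk2 card2D(1) unfolding Q_def by auto
  have "x - 1 = card {1..<x}" by simp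
  also have "\<dots> = card ({y\<in>A. y < x} \<union> \<Union>Q)" using seteq by simp
  also have "\<dots> = card {y\<in>A. y < x} + card (\<Union>Q)"
    using disjAQ finUQ AA_fin unfolding A_def by (intro card_Un_disjoint) auto
  also have "card {y\<in>A. y < x} = rk (AA P) x" unfolding rk_def A_def by simp
  also have "card (\<Union>Q) = 2 * card Q" using card_Union_dblocks[OF dbQ finQ] .
  also have "Q = (\<Union>l<rk (AA P) x. Gj P l)"
  proof
    show "Q \<subseteq> (\<Union>l<rk (AA P) x. Gj P l)"
    proof
      fix b assume "b \<in> Q"
      then have b: "b \<in> P - compK P" "Max b < x" unfolding Q_def by auto
      have "rk (AA P) (Min b) \<le> rk (AA P) x" using maxlt_iff[OF x b(1)] b(2) by simp
      moreover have "1 \<le> rk (AA P) (Min b)" using nonK_rk[OF b(1)] by simp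
      ultimately have "rk (AA P) (Min b) - 1 < rk (AA P) x" "rk (AA P) (Min b) = Suc (rk (AA P) (Min b) - 1)" by auto
      then show "b \<in> (\<Union>l<rk (AA P) x. Gj P l)" using b unfolding Gj_def by blast
    qed
  next
    show "(\<Union>l<rk (AA P) x. Gj P l) \<subseteq> Q"
    proof
      fix b assume "b \<in> (\<Union>l<rk (AA P) x. Gj P l)"
      then obtain l where l: "l < rk (AA P) x" "b \<in> Gj P l" by blast
      then have b: "b \<in> P - compK P" "rk (AA P) (Min b) = Suc l" unfolding Gj_def by auto
      then have "Max b < x" using maxlt_iff[OF x b(1)] l(1) by simp
      then show "b \<in> Q" using b unfolding Q_def by auto
    qed
  qed
  also have "card (\<Union>l<rk (AA P) x. Gj P l) = (\<Sum>l<rk (AA P) x. card (Gj P l))"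
    using Gj_fin Gj_disj by (intro card_UN_disjoint) auto
  also have "\<dots> = sum_list (take (rk (AA P) x) (msD P))"
    using sum_take_msD[of "rk (AA P) x"] rk_le_card[OF AA_fin, of x] card_AA by simp
  finally show ?thesis using x1 by simp
qed

lemma posf_rk: assumes x: "x \<in> AA P \<or> x = 2*n+1"
  shows "posf (msD P) (rk (AA P) x + 1) = x"
  using count_below[OF x] unfolding posf_def by simp

lemma akx: assumes k: "k \<le> 2 * card (compK P)"
  shows "\<exists>x. (x \<in> AA P \<or> x = 2*n+1) \<and> rk (AA P) x = k \<and> posf (msD P) (k+1) = x"
proof (cases "k < 2 * card (compK P)")
  case True
  then obtain x where "x \<in> AA P" "rk (AA P) x = k" using rk_AA_image by (metis imageE lessThan_iff)
  then show ?thesis using posf_rk by metis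
next
  case False
  then have k2: "k = card (AA P)" using k card_AA by simp
  have "rk (AA P) (2*n+1) = card (AA P)" using AA_sub by (intro rk_big[OF AA_fin]) auto
  then show ?thesis using posf_rk[of "2*n+1"] k2 by metis
qed

lemma sum_msD: "card (compK P) + sum_list (msD P) = n"
proof -
  have "rk (AA P) (2*n+1) = card (AA P)" using AA_sub by (intro rk_big[OF AA_fin]) auto
  then have "2*n+1 = 2 * card (compK P) + 1 + 2 * sum_list (take (2 * card (compK P)) (msD P))"
    using count_below[of "2*n+1"] card_AA by simp
  then show ?thesis using len_msD by simp
qed

lemma Gj_range: assumes j: "j < 2 * card (compK P)" and b: "b \<in> Gj P j" and z: "z \<in> b"
  shows "posf (msD P) (j+1) < z \<and> z < posf (msD P) (j+2)"
proof -
  have "\<exists>x. (x \<in> AA P \<or> x = 2*n+1) \<and> rk (AA P) x = j \<and> posf (msD P) (j+1) = x" using akx[of j] j by simp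
  then obtain x0 where x0: "x0 \<in> AA P \<or> x0 = 2*n+1" "rk (AA P) x0 = j" "posf (msD P) (j+1) = x0" by blast
  have "\<exists>x. (x \<in> AA P \<or> x = 2*n+1) \<and> rk (AA P) x = j+1 \<and> posf (msD P) (j+1+1) = x" using akx[of "j+1"] j by simp
  then obtain x1 where x1: "x1 \<in> AA P \<or> x1 = 2*n+1" "rk (AA P) x1 = j+1" "posf (msD P) (j+1+1) = x1" by blast
  have bK: "b \<in> P - compK P" and rkb: "rk (AA P) (Min b) = Suc j" using b unfolding Gj_def by auto
  have bP: "b \<in> P" using bK by auto
  have x0A: "x0 \<in> AA P"
  proof -
    have "rk (AA P) (2*n+1) = card (AA P)" using AA_sub by (intro rk_big[OF AA_fin]) auto
    then show ?thesis using x0 j card_AA by auto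
  qed
  have "x0 < Min b"
  proof (rule ccontr)
    assume "\<not> x0 < Min b"
    moreover have "Min b \<noteq> x0" using nonK_notA[OF bK card2D(5)[OF blk2[OF bP]]] x0A by auto
    ultimately have "Min b \<le> x0" by simp
    then have "rk (AA P) (Min b) \<le> rk (AA P) x0" using rk_mono[OF AA_fin] unfolding mono_def by blast
    then show False using rkb x0 by simp
  qed
  moreover have "Max b < x1" using maxlt_iff[OF x1(1) bK] rkb x1(2) by simp
  moreover have "Min b \<le> z" "z \<le> Max b" using card2_mem[OF blk2[OF bP] z] by auto
  ultimately show ?thesis using x0(3) x1(3) by simp
qed

lemma posf_msD_Suc: "j < 2 * card (compK P) \<Longrightarrow> posf (msD P) (j+2) = posf (msD P) (j+1) + 1 + 2 * card (Gj P j)"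
  using posf_Suc[of "msD P" j] len_msD nth_msD by simp

lemma Gj_union: assumes j: "j < 2 * card (compK P)"
  shows "\<Union>(Gj P j) = {posf (msD P) (j+1)<..<posf (msD P) (j+2)}"
proof (rule card_subset_eq)
  show "finite {posf (msD P) (j+1)<..<posf (msD P) (j+2)}" by simp
  show "\<Union>(Gj P j) \<subseteq> {posf (msD P) (j+1)<..<posf (msD P) (j+2)}" using Gj_range[OF j] by fastforce
  have "dblocks (Gj P j)" using PPdb Gj_sub unfolding dblocks_def by blast
  then have "card (\<Union>(Gj P j)) = 2 * card (Gj P j)" using card_Union_dblocks Gj_fin by blast
  then show "card (\<Union>(Gj P j)) = card {posf (msD P) (j+1)<..<posf (msD P) (j+2)}"
    using posf_msD_Suc[OF j] by simp
qed

lemma dblocks_compK: "dblocks (compK P)" using PPdb compK_sub unfolding dblocks_def by blast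

lemma map_fst_gsD: "map fst (gsD P) = msD P" unfolding gsD_def msD_def by simp

lemma len_gsD: "length (gsD P) = 2 * card (compK P)" unfolding gsD_def by simp

lemma nth_gsD: "j < 2 * card (compK P) \<Longrightarrow> gsD P ! j = (card (Gj P j), image (\<lambda>y. y - posf (msD P) (Suc j)) ` Gj P j)"
  unfolding gsD_def by simp

lemma rk1_mono: "mono (\<lambda>x. rk (AA P) x + 1)"
  using rk_mono[OF AA_fin] unfolding mono_def by simp

lemma rk1_inj: "inj_on (\<lambda>x. rk (AA P) x + 1) (AA P)"
  using rk_inj[OF AA_fin] unfolding inj_on_def by simp

lemma CD_COS: "CD P \<in> COS (card (compK P))"
proof -
  have db: "dblocks (CD P)" unfolding CD_def using rk1_inj dblocks_compK unfolding AA_def by (intro dblocks_image) auto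
  have "\<Union>(CD P) = (\<lambda>x. rk (AA P) x + 1) ` AA P" unfolding CD_def AA_def by blast
  also have "\<dots> = Suc ` (rk (AA P) ` AA P)" by (simp add: image_image)
  also have "\<dots> = {1..2 * card (compK P)}" using rk_AA_image image_Suc_lessThan by simp
  finally have un: "\<Union>(CD P) = {1..2 * card (compK P)}" .
  have pr: "parity_reversing (CD P)" unfolding CD_def
  proof (rule pr_image[where e = True])
    show "parity_reversing (compK P)" using PPpr compK_sub unfolding parity_reversing_def by blast
    fix x assume "x \<in> \<Union>(compK P)"
    then have "posf (msD P) (rk (AA P) x + 1) = x" using posf_rk unfolding AA_def by blast
    then show "even (rk (AA P) x + 1) = (even x = True)" using posf_parity[of "msD P" "rk (AA P) x + 1"] by simp
  qed
  have cn: "connected_pairing (CD P)" unfolding CD_def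
  proof (rule conn_image[OF compK_conn])
    fix x y assume "x \<in> compK P" "y \<in> compK P"
    then show "crosses ((\<lambda>x. rk (AA P) x + 1) ` x) ((\<lambda>x. rk (AA P) x + 1) ` y) = crosses x y"
      using crosses_image[OF rk1_mono rk1_inj] blk2 compK_sub unfolding AA_def by blast
  qed
  show ?thesis using db un pr cn unfolding COS_def pairing_iff by simp
qed

lemma gap_PRS: assumes j: "j < 2 * card (compK P)"
  shows "image (\<lambda>y. y - posf (msD P) (Suc j)) ` Gj P j \<in> PRS (card (Gj P j))"
proof -
  define s where "s = posf (msD P) (Suc j)"
  define h where "h = (\<lambda>y::nat. y - s)"
  have U: "\<Union>(Gj P j) = {s<..<s+1+2*card (Gj P j)}" using Gj_union[OF j] posf_msD_Suc[OF j] unfolding s_def by simp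
  have mono: "mono h" unfolding h_def by (simp add: mono_def diff_le_mono)
  have inj: "inj_on h (\<Union>(Gj P j))" unfolding U h_def by (auto simp: inj_on_def)
  have dbG: "dblocks (Gj P j)" using PPdb Gj_sub unfolding dblocks_def by blast
  have db: "dblocks (image h ` Gj P j)" by (rule dblocks_image[OF dbG inj])
  have "\<Union>(image h ` Gj P j) = h ` \<Union>(Gj P j)" by blast
  also have "\<dots> = {1..2 * card (Gj P j)}" unfolding U h_def by (rule image_minus_interval)
  finally have un: "\<Union>(image h ` Gj P j) = {1..2 * card (Gj P j)}" .
  have pr: "parity_reversing (image h ` Gj P j)"
  proof (rule pr_image[where e = "even s"])
    show "parity_reversing (Gj P j)" using PPpr Gj_sub unfolding parity_reversing_def by blast
    fix x assume "x \<in> \<Union>(Gj P j)"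
    then have "s \<le> x" unfolding U by simp
    then show "even (h x) = (even x = even s)" unfolding h_def by (rule even_minus)
  qed
  show ?thesis using db un pr unfolding PRS_def pairing_iff h_def s_def by simp
qed

lemma gsD_GL: "gsD P \<in> GL (2 * card (compK P)) (n - card (compK P))"
  unfolding GL_def
proof (intro CollectI conjI ballI)
  show "length (gsD P) = 2 * card (compK P)" by (rule len_gsD)
  show "sum_list (map fst (gsD P)) = n - card (compK P)" using map_fst_gsD sum_msD by simp
  fix g assume "g \<in> set (gsD P)"
  then obtain j where j: "j < 2 * card (compK P)" "g = gsD P ! j" using len_gsD by (metis in_set_conv_nth)
  then show "snd g \<in> PRS (fst g)" using nth_gsD gap_PRS by simp
qed

lemma Dec_SIG: "Dec P \<in> SIG n"
proof -
  have "card (compK P) \<le> n" using sum_msD by linarith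
  then show ?thesis unfolding Dec_def SIG_def using Pne CD_COS gsD_GL by simp
qed

lemma Emb_Dec: "Emb (CD P) (gsD P) = P"
proof -
  define f where "f = posf (msD P)"
  have part1: "image f ` CD P = compK P"
  proof -
    have "image f ` CD P = (\<lambda>b. (\<lambda>x. f (rk (AA P) x + 1)) ` b) ` compK P"
      unfolding CD_def by (simp add: image_image)
    also have "\<dots> = (\<lambda>b. b) ` compK P"
    proof (rule image_cong[OF refl])
      fix b assume b: "b \<in> compK P"
      have "\<And>x. x \<in> b \<Longrightarrow> f (rk (AA P) x + 1) = x" unfolding f_def using posf_rk b unfolding AA_def by blast
      then show "(\<lambda>x. f (rk (AA P) x + 1)) ` b = b" by simp
    qed
    finally show ?thesis by simp
  qed
  have part2: "image (\<lambda>y. y + f (Suc j)) ` snd (gsD P ! j) = Gj P j" if j: "j < 2 * card (compK P)" for j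
  proof -
    have "image (\<lambda>y. y + f (Suc j)) ` snd (gsD P ! j) = (\<lambda>b. (\<lambda>y. y - f (Suc j) + f (Suc j)) ` b) ` Gj P j"
      unfolding nth_gsD[OF j] f_def by (simp add: image_image)
    also have "\<dots> = (\<lambda>b. b) ` Gj P j"
    proof (rule image_cong[OF refl])
      fix b assume b: "b \<in> Gj P j"
      have "\<And>y. y \<in> b \<Longrightarrow> y - f (Suc j) + f (Suc j) = y" using Gj_range[OF j b] unfolding f_def by fastforce
      then show "(\<lambda>y. y - f (Suc j) + f (Suc j)) ` b = b" by simp
    qed
    finally show ?thesis by simp
  qed
  have "Emb (CD P) (gsD P) = compK P \<union> (\<Union>j<2 * card (compK P). Gj P j)"
    unfolding Emb_def map_fst_gsD len_gsD part1[unfolded f_def] using part2[unfolded f_def] by simp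
  also have "\<dots> = P" using Gj_part compK_sub by blast
  finally show ?thesis .
qed

end

lemma image_plus_interval: "(\<lambda>y. y + s) ` {1..2*c} = {s<..<s+1+2*(c::nat)}"
proof
  show "(\<lambda>y. y + s) ` {1..2*c} \<subseteq> {s<..<s+1+2*c}" by auto
  show "{s<..<s+1+2*c} \<subseteq> (\<lambda>y. y + s) ` {1..2*c}"
  proof
    fix z assume "z \<in> {s<..<s+1+2*c}"
    then have "z - s \<in> {1..2*c}" "z = (z - s) + s" by auto
    then show "z \<in> (\<lambda>y. y + s) ` {1..2*c}" by blast
  qed
qed

lemma nocross_interval:
  assumes "card x = 2" "card y = 2" "y \<subseteq> {lo<..<hi}" "\<forall>z\<in>x. z \<notin> {lo<..<hi}"
  shows "\<not> crosses x y"
proof -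
  have "Min y \<in> {lo<..<hi}" "Max y \<in> {lo<..<hi}" using assms(3) card2D(5,6)[OF assms(2)] by auto
  moreover have "Min x \<notin> {lo<..<hi}" "Max x \<notin> {lo<..<hi}" using assms(4) card2D(5,6)[OF assms(1)] by auto
  ultimately show ?thesis unfolding crosses_def by auto
qed

lemma posf_Suc_0[simp]: "posf ms (Suc 0) = 1" by (simp add: posf_def)

lemma db_card: "dblocks Q \<Longrightarrow> b \<in> Q \<Longrightarrow> card b = 2"
  unfolding dblocks_def by (erule conjE) (erule bspec)

lemma phi_sum: fixes \<phi> :: "nat \<Rightarrow> 'a::comm_ring_1"
  assumes "\<phi> 0 = 1" "\<And>a b. \<phi> (a + b) = \<phi> a * \<phi> b" "finite I"
  shows "\<phi> (\<Sum>j\<in>I. a j) = (\<Prod>j\<in>I. \<phi> (a j))"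
  using assms(3) by (induction rule: finite_induct) (simp_all add: assms(1,2))

lemma dblocks_Un: assumes "dblocks A" "dblocks B" "\<Union>A \<inter> \<Union>B = {}" shows "dblocks (A \<union> B)"
  unfolding dblocks_def
proof (intro conjI ballI impI)
  fix b assume "b \<in> A \<union> B" then show "card b = 2" using assms(1,2) unfolding dblocks_def by blast
next
  fix b c assume b: "b \<in> A \<union> B" and c: "c \<in> A \<union> B" and bc: "b \<noteq> c"
  show "b \<inter> c = {}"
  proof (cases "b \<in> A")
    case True
    show ?thesis
    proof (cases "c \<in> A")
      case True then show ?thesis using \<open>b \<in> A\<close> bc assms(1) unfolding dblocks_def by blast
    next
      case False then have "c \<in> B" using c by simp
      then show ?thesis using \<open>b \<in> A\<close> assms(3) by blast
    qed
  next
    case False then have bB: "b \<in> B" using b by simp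
    show ?thesis
    proof (cases "c \<in> A")
      case True then show ?thesis using bB assms(3) by blast
    next
      case False then have "c \<in> B" using c by simp
      then show ?thesis using bB bc assms(2) unfolding dblocks_def by blast
    qed
  qed
qed

lemma dblocks_UN: assumes "\<And>j. j \<in> I \<Longrightarrow> dblocks (Q j)"
  "\<And>j l. j \<in> I \<Longrightarrow> l \<in> I \<Longrightarrow> j \<noteq> l \<Longrightarrow> \<Union>(Q j) \<inter> \<Union>(Q l) = {}"
  shows "dblocks (\<Union>j\<in>I. Q j)"
  unfolding dblocks_def
proof (intro conjI ballI impI)
  fix b assume "b \<in> (\<Union>j\<in>I. Q j)" then show "card b = 2" using assms(1) unfolding dblocks_def by blast
next
  fix b c assume b: "b \<in> (\<Union>j\<in>I. Q j)" and c: "c \<in> (\<Union>j\<in>I. Q j)" and bc: "b \<noteq> c"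
  then obtain j l where jl: "j \<in> I" "b \<in> Q j" "l \<in> I" "c \<in> Q l" by blast
  show "b \<inter> c = {}"
  proof (cases "j = l")
    case True then show ?thesis using assms(1) jl bc unfolding dblocks_def by blast
  next
    case False then show ?thesis using assms(2)[OF jl(1,3) False] jl by blast
  qed
qed

definition Hg :: "(nat \<times> nat set set) list \<Rightarrow> nat \<Rightarrow> nat set set" where
  "Hg gs j = image (\<lambda>y. y + posf (map fst gs) (Suc j)) ` snd (gs!j)"

lemma Emb_Hg: "Emb C gs = image (posf (map fst gs)) ` C \<union> (\<Union>j<length gs. Hg gs j)"
  unfolding Emb_def Hg_def by simp

context
  fixes i m C gs assumes CC: "C \<in> COS i" and GG: "gs \<in> GL (2*i) m"
begin

lemma lenG: "length gs = 2*i" using GG unfolding GL_def by simp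
lemma gsj: "j < 2*i \<Longrightarrow> snd (gs!j) \<in> PRS (map fst gs ! j)"
  using GG lenG unfolding GL_def by (simp add: nth_mem)
lemma sumG: "sum_list (map fst gs) = m" using GG unfolding GL_def by simp
lemma Cpair: "dblocks C" "\<Union>C = {1..2*i}" "finite C" "card C = i" "parity_reversing C" "connected_pairing C"
  using CC pairing_finite[of i C] pairing_card[of i C] unfolding COS_def pairing_iff by auto

lemma sum_nth_ms: "(\<Sum>j<2*i. map fst gs ! j) = m"
  using sum.list_conv_set_nth[of "map fst gs"] lenG sumG by (simp add: atLeast0LessThan)

abbreviation "f \<equiv> posf (map fst gs)"

lemma f_end: "f (2*i+1) = 2*(i+m)+1"
  unfolding posf_def using lenG sumG by simp

lemma f_step: "j < 2*i \<Longrightarrow> f (Suc (Suc j)) = f (Suc j) + 1 + 2 * (map fst gs ! j)"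
  using posf_Suc[of "map fst gs" j] lenG by simp

lemma f_le: "f a \<le> f b \<longleftrightarrow> a \<le> b" using posf_strict strict_mono_less_eq by blast
lemma f_lt: "f a < f b \<longleftrightarrow> a < b" using posf_strict strict_mono_less by blast

lemma H_U: assumes j: "j < 2*i" shows "\<Union>(Hg gs j) = {f (Suc j)<..<f (Suc (Suc j))}"
proof -
  have "\<Union>(snd (gs!j)) = {1..2 * (map fst gs ! j)}" using gsj[OF j] unfolding PRS_def pairing_iff by simp
  then have "\<Union>(Hg gs j) = (\<lambda>y. y + f (Suc j)) ` {1..2 * (map fst gs ! j)}" unfolding Hg_def by blast
  also have "\<dots> = {f (Suc j)<..<f (Suc (Suc j))}" using image_plus_interval f_step[OF j] by simp
  finally show ?thesis .
qed

lemma H_props: assumes j: "j < 2*i"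
  shows "dblocks (Hg gs j)" "finite (Hg gs j)" "card (Hg gs j) = map fst gs ! j"
    "parity_reversing (Hg gs j)" "crossings (Hg gs j) = crossings (snd (gs!j))"
proof -
  have g: "pairing (map fst gs ! j) (snd (gs!j))" "parity_reversing (snd (gs!j))" using gsj[OF j] unfolding PRS_def by auto
  have dbg: "dblocks (snd (gs!j))" using g unfolding pairing_iff by simp
  have fing: "finite (snd (gs!j))" using pairing_finite[OF g(1)] .
  have inj: "inj_on (\<lambda>y. y + f (Suc j)) (\<Union>(snd (gs!j)))" by (simp add: inj_on_def)
  have mono: "mono (\<lambda>y::nat. y + f (Suc j))" by (simp add: mono_def)
  show "dblocks (Hg gs j)" unfolding Hg_def by (rule dblocks_image[OF dbg inj])
  show "finite (Hg gs j)" unfolding Hg_def using fing by simp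
  have "inj (\<lambda>y::nat. y + f (Suc j))" by (simp add: inj_def)
  then have "inj_on (image (\<lambda>y. y + f (Suc j))) (snd (gs!j))" unfolding inj_on_def using inj_image_eq_iff by blast
  then show "card (Hg gs j) = map fst gs ! j" unfolding Hg_def using card_image pairing_card[OF g(1)] by metis
  show "parity_reversing (Hg gs j)" unfolding Hg_def
    by (rule pr_image[OF g(2), where e = "even (f (Suc j))"]) simp
  show "crossings (Hg gs j) = crossings (snd (gs!j))" unfolding Hg_def
    by (rule crossings_image[OF mono inj dbg fing])
qed

abbreviation "K0 \<equiv> image f ` C"

lemma K0_props: "dblocks K0" "finite K0" "card K0 = i" "parity_reversing K0" "crossings K0 = crossings C"
  "\<Union>K0 = f ` {1..2*i}"
proof -
  have inj: "inj_on f (\<Union>C)" using posf_inj by (metis inj_on_subset subset_UNIV)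
  show "dblocks K0" by (rule dblocks_image[OF Cpair(1) inj])
  show "finite K0" using Cpair(3) by simp
  have "inj_on (image f) C" using posf_inj by (auto simp: inj_on_def inj_image_eq_iff)
  then show "card K0 = i" using card_image Cpair(4) by metis
  show "parity_reversing K0" by (rule pr_image[OF Cpair(5), where e = True]) (simp add: posf_parity)
  show "crossings K0 = crossings C" by (rule crossings_image[OF posf_mono inj Cpair(1,3)])
  show "\<Union>K0 = f ` {1..2*i}" using Cpair(2) by blast
qed

lemma K0_out: assumes j: "j < 2*i" and z: "z \<in> \<Union>K0" shows "z \<notin> {f (Suc j)<..<f (Suc (Suc j))}"
proof -
  have "z \<in> f ` {1..2*i}" using z unfolding K0_props(6) .
  then obtain c where c: "c \<in> {1..2*i}" "z = f c" by blast
  show ?thesis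
  proof (cases "c \<le> Suc j")
    case True then have "f c \<le> f (Suc j)" using f_le by blast
    then show ?thesis using c by simp
  next
    case False then have "f (Suc (Suc j)) \<le> f c" using f_le by simp
    then show ?thesis using c by simp
  qed
qed

lemma H_out: assumes j: "j < 2*i" "l < 2*i" "j \<noteq> l" and z: "z \<in> \<Union>(Hg gs l)"
  shows "z \<notin> {f (Suc j)<..<f (Suc (Suc j))}"
proof -
  have "z \<in> {f (Suc l)<..<f (Suc (Suc l))}" using z unfolding H_U[OF j(2)] .
  then have z': "f (Suc l) < z" "z < f (Suc (Suc l))" by auto
  show ?thesis
  proof (cases "l < j")
    case True then have "f (Suc (Suc l)) \<le> f (Suc j)" using f_le by simp
    then show ?thesis using z' by simp
  next
    case False then have "j < l" using j by simp
    then have "f (Suc (Suc j)) \<le> f (Suc l)" using f_le by simp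
    then show ?thesis using z' by simp
  qed
qed

abbreviation "HU \<equiv> (\<Union>j<2*i. Hg gs j)"

lemma Emb_eq: "Emb C gs = K0 \<union> HU" using Emb_Hg lenG by simp

lemma K0_H_nocross: assumes j: "j < 2*i" and x: "x \<in> K0" and y: "y \<in> Hg gs j"
  shows "\<not> crosses x y"
proof (rule nocross_interval)
  show "card x = 2" by (rule db_card[OF K0_props(1) x])
  show "card y = 2" by (rule db_card[OF H_props(1)[OF j] y])
  have "y \<subseteq> \<Union>(Hg gs j)" using y by blast
  then show "y \<subseteq> {f (Suc j)<..<f (Suc (Suc j))}" unfolding H_U[OF j] .
  show "\<forall>z\<in>x. z \<notin> {f (Suc j)<..<f (Suc (Suc j))}"
  proof
    fix z assume "z \<in> x" then have "z \<in> \<Union>K0" using x by blast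
    then show "z \<notin> {f (Suc j)<..<f (Suc (Suc j))}" by (rule K0_out[OF j])
  qed
qed

lemma H_H_nocross: assumes j: "j < 2*i" "l < 2*i" "j \<noteq> l" and x: "x \<in> Hg gs l" and y: "y \<in> Hg gs j"
  shows "\<not> crosses x y"
proof (rule nocross_interval)
  show "card x = 2" by (rule db_card[OF H_props(1)[OF j(2)] x])
  show "card y = 2" by (rule db_card[OF H_props(1)[OF j(1)] y])
  have "y \<subseteq> \<Union>(Hg gs j)" using y by blast
  then show "y \<subseteq> {f (Suc j)<..<f (Suc (Suc j))}" unfolding H_U[OF j(1)] .
  show "\<forall>z\<in>x. z \<notin> {f (Suc j)<..<f (Suc (Suc j))}"
  proof
    fix z assume "z \<in> x" then have "z \<in> \<Union>(Hg gs l)" using x by blast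
    then show "z \<notin> {f (Suc j)<..<f (Suc (Suc j))}" by (rule H_out[OF j])
  qed
qed

lemma K0_H_disj: assumes j: "j < 2*i" shows "\<Union>K0 \<inter> \<Union>(Hg gs j) = {}"
proof (rule equals0I)
  fix z assume z: "z \<in> \<Union>K0 \<inter> \<Union>(Hg gs j)"
  have "z \<in> \<Union>(Hg gs j)" using z by (rule IntD2)
  then have "z \<in> {f (Suc j)<..<f (Suc (Suc j))}" unfolding H_U[OF j] .
  moreover have "z \<in> \<Union>K0" using z by (rule IntD1)
  ultimately show False using K0_out[OF j] by blast
qed

lemma H_H_disj: assumes j: "j < 2*i" "l < 2*i" "j \<noteq> l" shows "\<Union>(Hg gs j) \<inter> \<Union>(Hg gs l) = {}"
proof (rule equals0I)
  fix z assume z: "z \<in> \<Union>(Hg gs j) \<inter> \<Union>(Hg gs l)"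
  have "z \<in> \<Union>(Hg gs j)" using z by (rule IntD1)
  then have "z \<in> {f (Suc j)<..<f (Suc (Suc j))}" unfolding H_U[OF j(1)] .
  moreover have "z \<in> \<Union>(Hg gs l)" using z by (rule IntD2)
  ultimately show False using H_out[OF j] by blast
qed

lemma blocks_ne: "dblocks Q \<Longrightarrow> b \<in> Q \<Longrightarrow> \<exists>z. z \<in> b"
  using card2D(2)[OF db_card] by (metis ex_in_conv)

lemma K0_H_bdisj: assumes j: "j < 2*i" shows "K0 \<inter> Hg gs j = {}"
proof (rule equals0I)
  fix b assume b: "b \<in> K0 \<inter> Hg gs j"
  then obtain z where "z \<in> b" using blocks_ne[OF K0_props(1)] by blast
  then have "z \<in> \<Union>K0 \<inter> \<Union>(Hg gs j)" using b by blast
  then show False using K0_H_disj[OF j] by blast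
qed

lemma H_H_bdisj: assumes j: "j < 2*i" "l < 2*i" "j \<noteq> l" shows "Hg gs j \<inter> Hg gs l = {}"
proof (rule equals0I)
  fix b assume b: "b \<in> Hg gs j \<inter> Hg gs l"
  then obtain z where "z \<in> b" using blocks_ne[OF H_props(1)[OF j(1)]] by blast
  then have "z \<in> \<Union>(Hg gs j) \<inter> \<Union>(Hg gs l)" using b by blast
  then show False using H_H_disj[OF j] by blast
qed

lemma HU_db: "dblocks HU" by (rule dblocks_UN) (auto simp: H_props H_H_disj)
lemma HU_fin: "finite HU" using H_props(2) by simp

lemma Emb_db: "dblocks (Emb C gs)"
  unfolding Emb_eq by (rule dblocks_Un[OF K0_props(1) HU_db]) (use K0_H_disj in blast)

lemma Emb_fin: "finite (Emb C gs)" unfolding Emb_eq using K0_props(2) HU_fin by simp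

lemma Emb_card: "card (Emb C gs) = i + m"
proof -
  have "card HU = (\<Sum>j<2*i. card (Hg gs j))"
    by (rule card_UN_disjoint) (auto simp: H_props(2) H_H_bdisj)
  also have "\<dots> = m" using H_props(3) sum_nth_ms by simp
  finally have "card HU = m" .
  moreover have "K0 \<inter> HU = {}" using K0_H_bdisj by blast
  ultimately show ?thesis unfolding Emb_eq using card_Un_disjoint K0_props(2,3) HU_fin by metis
qed

lemma Emb_U: "\<Union>(Emb C gs) = {1..2*(i+m)}"
proof (rule card_subset_eq)
  show "finite {1..2*(i+m)}" by simp
  show "\<Union>(Emb C gs) \<subseteq> {1..2*(i+m)}"
  proof
    fix z assume "z \<in> \<Union>(Emb C gs)"
    then have "z \<in> \<Union>K0 \<or> (\<exists>j<2*i. z \<in> \<Union>(Hg gs j))" unfolding Emb_eq by blast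
    then show "z \<in> {1..2*(i+m)}"
    proof
      assume "z \<in> \<Union>K0"
      then have "z \<in> f ` {1..2*i}" unfolding K0_props(6) .
      then obtain c where c: "c \<in> {1..2*i}" "z = f c" by blast
      have "f 1 \<le> f c" using c by (subst f_le) simp
      moreover have "f c < f (2*i+1)" using c by (subst f_lt) simp
      ultimately have "1 \<le> f c" "f c < f (2*i+1)" by simp_all
      then show ?thesis using c f_end by simp
    next
      assume "\<exists>j<2*i. z \<in> \<Union>(Hg gs j)"
      then obtain j where j: "j < 2*i" "z \<in> \<Union>(Hg gs j)" by blast
      then have "z \<in> {f (Suc j)<..<f (Suc (Suc j))}" unfolding H_U[OF j(1)] by simp
      then have "f (Suc j) < z" "z < f (Suc (Suc j))" by auto
      moreover have "f (Suc (Suc j)) \<le> f (2*i+1)" using j by (subst f_le) simp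
      ultimately show ?thesis using f_end by simp
    qed
  qed
  show "card (\<Union>(Emb C gs)) = card {1..2*(i+m)}"
    using card_Union_dblocks[OF Emb_db Emb_fin] Emb_card by simp
qed

lemma Emb_PRS: "Emb C gs \<in> PRS (i+m)"
proof -
  have "parity_reversing (Emb C gs)" unfolding parity_reversing_def
  proof
    fix b assume "b \<in> Emb C gs"
    then have "b \<in> K0 \<or> (\<exists>j<2*i. b \<in> Hg gs j)" unfolding Emb_eq by blast
    then show "\<exists>x\<in>b. \<exists>y\<in>b. odd x \<and> even y"
    proof
      assume "b \<in> K0" then show ?thesis using K0_props(4) unfolding parity_reversing_def by blast
    next
      assume "\<exists>j<2*i. b \<in> Hg gs j"
      then obtain j where "j < 2*i" "b \<in> Hg gs j" by blast
      then show ?thesis using H_props(4)[of j] unfolding parity_reversing_def by blast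
    qed
  qed
  then show ?thesis using Emb_db Emb_U unfolding PRS_def pairing_iff by simp
qed

lemma Emb_cr: "crossings (Emb C gs) = crossings C + (\<Sum>j<2*i. crossings (snd (gs!j)))"
proof -
  have "crossings (Emb C gs) = crossings K0 + crossings HU"
    unfolding Emb_eq
  proof (rule crossings_Un[OF K0_props(2) HU_fin])
    show "K0 \<inter> HU = {}" using K0_H_bdisj by blast
    fix x y assume "x \<in> K0" "y \<in> HU"
    then obtain j where "j < 2*i" "y \<in> Hg gs j" by blast
    then show "\<not> crosses x y" using K0_H_nocross \<open>x \<in> K0\<close> by blast
  qed
  also have "crossings HU = (\<Sum>j<2*i. crossings (Hg gs j))"
  proof (rule crossings_UN)
    show "finite {..<2*i}" by simp
    fix j assume "j \<in> {..<2*i}" then show "finite (Hg gs j)" using H_props(2) by simp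
  next
    fix j l assume "j \<in> {..<2*i}" "l \<in> {..<2*i}" "j \<noteq> l"
    then show "Hg gs j \<inter> Hg gs l = {}" using H_H_bdisj by simp
  next
    fix j l x y assume "j \<in> {..<2*i}" "l \<in> {..<2*i}" "j \<noteq> l" "x \<in> Hg gs j" "y \<in> Hg gs l"
    then show "\<not> crosses x y" using H_H_nocross[of l j x y] by simp
  qed
  also have "\<dots> = (\<Sum>j<2*i. crossings (snd (gs!j)))" using H_props(5) by simp
  finally show ?thesis using K0_props(5) by simp
qed

lemma Emb_weight: fixes \<phi> :: "nat \<Rightarrow> 'a::comm_ring_1"
  assumes "\<phi> 0 = 1" "\<And>a b. \<phi> (a + b) = \<phi> a * \<phi> b"
  shows "\<phi> (crossings (Emb C gs)) = \<phi> (crossings C) * wl \<phi> gs"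
proof -
  have "wl \<phi> gs = (\<Prod>j<2*i. \<phi> (crossings (snd (gs!j))))"
    unfolding wl_def using prod.list_conv_set_nth[of "map (\<lambda>g. \<phi> (crossings (snd g))) gs"] lenG
    by (simp add: atLeast0LessThan)
  moreover have "\<phi> (\<Sum>j<2*i. crossings (snd (gs!j))) = (\<Prod>j<2*i. \<phi> (crossings (snd (gs!j))))"
    by (rule phi_sum[OF assms]) simp
  ultimately show ?thesis unfolding Emb_cr using assms(2) by simp
qed

lemma f_inj: "inj_on f X" using posf_inj by (metis inj_on_subset subset_UNIV)

lemma Pe_ne: "1 \<le> i \<Longrightarrow> Emb C gs \<noteq> {}"
proof -
  assume "1 \<le> i"
  then have "C \<noteq> {}" using Cpair(4) by auto
  then show ?thesis unfolding Emb_eq by blast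
qed

context assumes ipos: "1 \<le> i"
begin

lemma PePRS: "Emb C gs \<in> PRS (i+m)" by (rule Emb_PRS)
lemma Pene: "Emb C gs \<noteq> {}" by (rule Pe_ne[OF ipos])

lemma c1_ex: "\<exists>c1\<in>C. 1 \<in> c1" using Cpair(2) ipos by auto

lemma b1_Pe: assumes c1: "c1 \<in> C" "1 \<in> c1" shows "b1 (Emb C gs) = f ` c1"
proof -
  have a: "b1 (Emb C gs) \<in> Emb C gs" "1 \<in> b1 (Emb C gs)" using b1_prop[OF PePRS Pene] by auto
  have b1': "f ` c1 \<in> Emb C gs" using c1 unfolding Emb_eq by blast
  have "1 \<in> f ` c1" using image_eqI[of 1 f 1 c1] c1(2) by simp
  note b = b1' this
  show ?thesis using disj[OF PePRS Pene a(1) b(1) a(2) b(2)] .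
qed

lemma compK_Pe: "compK (Emb C gs) = K0"
proof -
  obtain c1 where c1: "c1 \<in> C" "1 \<in> c1" using c1_ex by blast
  note b1e = b1_Pe[OF c1]
  have sub: "K0 \<subseteq> Emb C gs" unfolding Emb_eq by blast
  show ?thesis
  proof
    show "compK (Emb C gs) \<subseteq> K0"
    proof
      fix b assume "b \<in> compK (Emb C gs)"
      then have "(f ` c1, b) \<in> (crel (Emb C gs))\<^sup>*" unfolding compK_def b1e by auto
      then show "b \<in> K0"
      proof (induction rule: rtrancl_induct)
        case base then show ?case using c1 by blast
      next
        case (step y z)
        have z: "z \<in> Emb C gs" "crosses y z" using step(2) unfolding crel_def by auto
        show ?case
        proof (rule ccontr)
          assume "z \<notin> K0"
          then have "z \<in> HU" using z(1) unfolding Emb_eq by blast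
          then obtain j where "j < 2*i" "z \<in> Hg gs j" by blast
          then show False using K0_H_nocross step(3) z(2) by blast
        qed
      qed
    qed
  next
    show "K0 \<subseteq> compK (Emb C gs)"
    proof
      fix b assume "b \<in> K0"
      then obtain c where c: "c \<in> C" "b = f ` c" by blast
      have "(c1, c) \<in> (crel C)\<^sup>*" by (rule conn_reach[OF Cpair(6) c1(1) c(1)])
      then have "(f ` c1, f ` c) \<in> (crel (Emb C gs))\<^sup>*"
      proof (rule rtrancl_map)
        fix x y assume "(x, y) \<in> crel C"
        then have xy: "x \<in> C" "y \<in> C" "crosses x y" unfolding crel_def by auto
        have "crosses (f ` x) (f ` y) = crosses x y"
          by (rule crosses_image[OF posf_mono f_inj[of UNIV]]) (simp_all add: db_card[OF Cpair(1)] xy)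
        then show "(f ` x, f ` y) \<in> crel (Emb C gs)" using xy sub unfolding crel_def by blast
      qed
      then show "b \<in> compK (Emb C gs)" unfolding compK_def b1e using c sub by blast
    qed
  qed
qed

lemma AA_Pe: "AA (Emb C gs) = f ` {1..2*i}"
  unfolding AA_def compK_Pe using K0_props(6) .

lemma rk_f: assumes c: "c \<in> {1..2*i}" shows "rk (AA (Emb C gs)) (f c) = c - 1"
proof -
  have "{y \<in> f ` {1..2*i}. y < f c} = f ` {1..<c}"
  proof
    show "{y \<in> f ` {1..2*i}. y < f c} \<subseteq> f ` {1..<c}" using f_lt by auto
    show "f ` {1..<c} \<subseteq> {y \<in> f ` {1..2*i}. y < f c}" using c f_lt by auto
  qed
  then have "rk (AA (Emb C gs)) (f c) = card (f ` {1..<c})" unfolding rk_def AA_Pe by simp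
  also have "\<dots> = c - 1" using card_image[OF f_inj] by simp
  finally show ?thesis .
qed

lemma rk_gap: assumes j: "j < 2*i" and z: "f (Suc j) < z" "z < f (Suc (Suc j))"
  shows "rk (AA (Emb C gs)) z = Suc j"
proof -
  have "{y \<in> f ` {1..2*i}. y < z} = f ` {1..Suc j}"
  proof
    show "{y \<in> f ` {1..2*i}. y < z} \<subseteq> f ` {1..Suc j}"
    proof
      fix y assume "y \<in> {y \<in> f ` {1..2*i}. y < z}"
      then obtain c where c: "c \<in> {1..2*i}" "y = f c" "f c < z" by auto
      have "c \<le> Suc j"
      proof (rule ccontr)
        assume "\<not> c \<le> Suc j"
        then have "f (Suc (Suc j)) \<le> f c" by (subst f_le) simp
        then show False using c z by simp
      qed
      then show "y \<in> f ` {1..Suc j}" using c by auto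
    qed
    show "f ` {1..Suc j} \<subseteq> {y \<in> f ` {1..2*i}. y < z}"
    proof
      fix y assume "y \<in> f ` {1..Suc j}"
      then obtain c where c: "c \<in> {1..Suc j}" "y = f c" by auto
      have "f c \<le> f (Suc j)" using c by (subst f_le) simp
      then show "y \<in> {y \<in> f ` {1..2*i}. y < z}" using c z j by auto
    qed
  qed
  then have "rk (AA (Emb C gs)) z = card (f ` {1..Suc j})" unfolding rk_def AA_Pe by simp
  also have "\<dots> = Suc j" using card_image[OF f_inj] by simp
  finally show ?thesis .
qed

lemma CD_Pe: "CD (Emb C gs) = C"
proof -
  have "CD (Emb C gs) = (\<lambda>b. (\<lambda>c. rk (AA (Emb C gs)) (f c) + 1) ` b) ` C"
    unfolding CD_def compK_Pe by (simp add: image_image)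
  also have "\<dots> = (\<lambda>b. b) ` C"
  proof (rule image_cong[OF refl])
    fix b assume b: "b \<in> C"
    have "\<And>c. c \<in> b \<Longrightarrow> rk (AA (Emb C gs)) (f c) + 1 = c"
    proof -
      fix c assume "c \<in> b"
      then have "c \<in> {1..2*i}" using b Cpair(2) by blast
      then show "rk (AA (Emb C gs)) (f c) + 1 = c" using rk_f by simp
    qed
    then show "(\<lambda>c. rk (AA (Emb C gs)) (f c) + 1) ` b = b" by simp
  qed
  finally show ?thesis by simp
qed

lemma card_compK_Pe: "card (compK (Emb C gs)) = i" using compK_Pe K0_props(3) by simp

lemma Gj_Pe: assumes j: "j < 2*i" shows "Gj (Emb C gs) j = Hg gs j"
proof -
  have kh: "HU \<inter> K0 = {}" using K0_H_bdisj by blast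
  have diff: "Emb C gs - compK (Emb C gs) = HU"
  proof -
    have "Emb C gs - compK (Emb C gs) = Emb C gs - K0" by (subst compK_Pe) (rule refl)
    also have "\<dots> = (K0 \<union> HU) - K0" by (subst Emb_eq) (rule refl)
    also have "\<dots> = HU" by (simp add: Un_Diff Diff_triv[OF kh])
    finally show ?thesis .
  qed
  have rkH: "rk (AA (Emb C gs)) (Min b) = Suc l" if l: "l < 2*i" and b: "b \<in> Hg gs l" for l b
  proof -
    have "Min b \<in> b" using card2D(5)[OF db_card[OF H_props(1)[OF l] b]] .
    then have "Min b \<in> \<Union>(Hg gs l)" using b by blast
    then have "Min b \<in> {f (Suc l)<..<f (Suc (Suc l))}" unfolding H_U[OF l] .
    then show ?thesis using rk_gap[OF l] by simp
  qed
  show ?thesis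
  proof
    show "Gj (Emb C gs) j \<subseteq> Hg gs j"
    proof
      fix b assume "b \<in> Gj (Emb C gs) j"
      then have b: "b \<in> HU" "rk (AA (Emb C gs)) (Min b) = Suc j" unfolding Gj_def diff by auto
      then obtain l where l: "l < 2*i" "b \<in> Hg gs l" by blast
      then have "l = j" using rkH b(2) by simp
      then show "b \<in> Hg gs j" using l by simp
    qed
    show "Hg gs j \<subseteq> Gj (Emb C gs) j"
    proof
      fix b assume b: "b \<in> Hg gs j"
      then have "b \<in> HU" using j by blast
      then show "b \<in> Gj (Emb C gs) j" unfolding Gj_def diff using rkH[OF j b] by simp
    qed
  qed
qed

lemma msD_Pe: "msD (Emb C gs) = map fst gs"
proof (rule nth_equalityI)
  show "length (msD (Emb C gs)) = length (map fst gs)" unfolding msD_def card_compK_Pe using lenG by simp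
  fix j assume "j < length (msD (Emb C gs))"
  then have j: "j < 2*i" unfolding msD_def card_compK_Pe by simp
  show "msD (Emb C gs) ! j = map fst gs ! j"
    unfolding msD_def card_compK_Pe using j Gj_Pe[OF j] H_props(3)[OF j] by simp
qed

lemma gsD_Pe: "gsD (Emb C gs) = gs"
proof (rule nth_equalityI)
  show "length (gsD (Emb C gs)) = length gs" unfolding gsD_def card_compK_Pe using lenG by simp
  fix j assume "j < length (gsD (Emb C gs))"
  then have j: "j < 2*i" unfolding gsD_def card_compK_Pe by simp
  have "image (\<lambda>y. y - f (Suc j)) ` Hg gs j = (\<lambda>b. (\<lambda>y. y + f (Suc j) - f (Suc j)) ` b) ` snd (gs!j)"
    unfolding Hg_def by (simp add: image_image)
  also have "\<dots> = snd (gs!j)" by simp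
  finally have e: "image (\<lambda>y. y - f (Suc j)) ` Hg gs j = snd (gs!j)" .
  have "gsD (Emb C gs) ! j = (card (Hg gs j), image (\<lambda>y. y - f (Suc j)) ` Hg gs j)"
    unfolding gsD_def card_compK_Pe msD_Pe using j Gj_Pe[OF j] by simp
  also have "\<dots> = (fst (gs!j), snd (gs!j))" using H_props(3)[OF j] e j lenG by simp
  finally show "gsD (Emb C gs) ! j = gs ! j" by simp
qed

lemma Dec_Emb: "Dec (Emb C gs) = (i, C, gs)"
  unfolding Dec_def using Pene card_compK_Pe CD_Pe gsD_Pe by simp

end

end

lemma pairing_0: "pairing 0 P \<longleftrightarrow> P = {}"
proof
  assume "pairing 0 P"
  then have "\<Union>P = {}" "\<forall>b\<in>P. card b = 2" by (auto simp: pairing_def)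
  show "P = {}"
  proof (rule ccontr)
    assume "P \<noteq> {}"
    then obtain b where "b \<in> P" by blast
    then have "b = {}" "card b = 2" using \<open>\<Union>P = {}\<close> \<open>\<forall>b\<in>P. card b = 2\<close> by auto
    then show False by simp
  qed
qed (simp add: pairing_def)

lemma COS_0: "COS 0 = {{}}"
  by (auto simp: COS_def pairing_0 parity_reversing_def connected_pairing_def)

lemma Emb_nil: "Emb {} [] = {}" unfolding Emb_def by simp
lemma Dec_empty: "Dec {} = (0, {}, [])" unfolding Dec_def by simp

lemma decomp:
  fixes \<phi> :: "nat \<Rightarrow> 'a::comm_ring_1"
  assumes phi0: "\<phi> 0 = 1" and phiadd: "\<And>a b. \<phi> (a + b) = \<phi> a * \<phi> b"
  shows "(\<Sum>P\<in>PRS n. \<phi> (crossings P)) = (\<Sum>(i, C, gs)\<in>SIG n. \<phi> (crossings C) * wl \<phi> gs)"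
proof -
  have "(\<Sum>(i, C, gs)\<in>SIG n. \<phi> (crossings C) * wl \<phi> gs) = (\<Sum>P\<in>PRS n. \<phi> (crossings P))"
  proof (rule sum.reindex_bij_witness[where j = "\<lambda>(i, C, gs). Emb C gs" and i = Dec])
    fix a assume a: "a \<in> SIG n"
    then obtain i C gs where a': "a = (i, C, gs)" "i \<le> n" "C \<in> COS i" "gs \<in> GL (2*i) (n - i)"
      unfolding SIG_def by auto
    show "Dec (case a of (i, C, gs) \<Rightarrow> Emb C gs) = a"
    proof (cases "1 \<le> i")
      case True then show ?thesis using Dec_Emb[OF a'(3,4) True] a'(1) by simp
    next
      case False
      then have "i = 0" by simp
      then have "gs = []" "C = {}" using a'(3,4) COS_0 unfolding GL_def by auto
      then show ?thesis using a' \<open>i = 0\<close> Emb_nil Dec_empty by simp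
    qed
    have "Emb C gs \<in> PRS (i + (n - i))" by (rule Emb_PRS[OF a'(3,4)])
    then show "(case a of (i, C, gs) \<Rightarrow> Emb C gs) \<in> PRS n" using a' by simp
    show "\<phi> (crossings (case a of (i, C, gs) \<Rightarrow> Emb C gs)) = (case a of (i, C, gs) \<Rightarrow> \<phi> (crossings C) * wl \<phi> gs)"
      using Emb_weight[OF a'(3,4) phi0 phiadd] a'(1) by simp
  next
    fix P assume P: "P \<in> PRS n"
    show "(case Dec P of (i, C, gs) \<Rightarrow> Emb C gs) = P"
    proof (cases "P = {}")
      case True then show ?thesis using Emb_nil Dec_empty by simp
    next
      case False then show ?thesis using Emb_Dec[OF P False] unfolding Dec_def by simp
    qed
    show "Dec P \<in> SIG n"
    proof (cases "P = {}")
      case True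
      then have "n = 0" using P unfolding PRS_def pairing_def by auto
      moreover have "{} \<in> COS 0" using COS_0 by simp
      ultimately show ?thesis using True Dec_empty unfolding SIG_def GL_def by simp
    next
      case False then show ?thesis using Dec_SIG[OF P False] by simp
    qed
  qed
  then show ?thesis by simp
qed

lemma card_COS: "b_n n = card (COS n)"
  using COS_0 by (cases "n = 0") (simp_all add: b_n_def COS_def)

lemma sum_if_card: "finite A \<Longrightarrow> (\<Sum>P\<in>A. if k = gg P then (1::'a::comm_ring_1) else 0) = of_nat (card {P\<in>A. gg P = k})"
proof -
  assume A: "finite A"
  have "(\<Sum>P\<in>A. if k = gg P then (1::'a) else 0) = (\<Sum>P\<in>{P\<in>A. k = gg P}. 1)"
    using A by (subst sum.If_cases) (simp_all add: Int_def)
  moreover have "{x\<in>A. k = gg x} = {P\<in>A. gg P = k}" by auto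
  ultimately show ?thesis by simp
qed

lemma F_eq: "F_fps = Sf (\<lambda>k. 1)"
  by (rule fps_ext) (simp add: F_fps_def Sf_nth card_PRS)

lemma B_eq: "B_fps = Tf (\<lambda>k. 1)"
  by (rule fps_ext) (simp add: B_fps_def Tf_nth card_COS)

lemma R_eq: "R_fps = Sf (\<lambda>k. fps_X ^ k)"
proof (rule fps_ext)
  fix n
  show "R_fps $ n = Sf (\<lambda>k. fps_X ^ k) $ n"
  proof (rule fps_ext)
    fix k
    have "Sf (\<lambda>k. fps_X ^ k) $ n $ k = (\<Sum>P\<in>PRS n. if k = crossings P then (1::int) else 0)"
      by (simp add: Sf_nth fps_sum_nth)
    also have "\<dots> = int (card {P\<in>PRS n. crossings P = k})" by (rule sum_if_card[OF finite_PRS])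
    also have "\<dots> = R_fps $ n $ k" by (simp add: R_fps_def r_nk_def PRS_def)
    finally show "R_fps $ n $ k = Sf (\<lambda>k. fps_X ^ k) $ n $ k" by simp
  qed
qed

lemma B2_eq: "B2_fps = Tf (\<lambda>k. fps_X ^ k)"
proof (rule fps_ext)
  fix n
  show "B2_fps $ n = Tf (\<lambda>k. fps_X ^ k) $ n"
  proof (rule fps_ext)
    fix k
    have "Tf (\<lambda>k. fps_X ^ k) $ n $ k = (\<Sum>P\<in>COS n. if k = crossings P then (1::int) else 0)"
      by (simp add: Tf_nth fps_sum_nth)
    also have "\<dots> = int (card {P\<in>COS n. crossings P = k})" by (rule sum_if_card[OF finite_COS])
    also have "\<dots> = B2_fps $ n $ k"
    proof (cases "n = 0")
      case True
      have "crossings {} = 0" by (simp add: crossings_def)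
      have "{P\<in>COS n. crossings P = k} = (if k = 0 then {{}} else {})" using True \<open>crossings {} = 0\<close> COS_0 by auto
      then show ?thesis using True by (simp add: B2_fps_def b_nk_def)
    next
      case False then show ?thesis by (simp add: B2_fps_def b_nk_def COS_def)
    qed
    finally show "B2_fps $ n $ k = Tf (\<lambda>k. fps_X ^ k) $ n $ k" by simp
  qed
qed

theorem mainTheorem5:
  shows "F_fps = B_fps oo (fps_X * F_fps ^ 2) \<and> R_fps = B2_fps oo (fps_X * R_fps ^ 2)"
proof
  show "F_fps = B_fps oo (fps_X * F_fps ^ 2)"
    unfolding F_eq B_eq by (rule generic_fps) (rule decomp, simp_all)
  show "R_fps = B2_fps oo (fps_X * R_fps ^ 2)"
    unfolding R_eq B2_eq by (rule generic_fps) (rule decomp, simp_all add: power_add)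
qed

end
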